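(* For each $n\ge1$, the number of acyclic orientations of $\Gamma_n$ equals $T_n(2,0)=T_{2,n}(2,0)+3N_n(2,0)+M_n(2,0)$, and $$T_{n+1}(2,0)=T_n(2,0)^3-2\left(T_{2,n}(2,0)+N_n(2,0)\right)^3,$$ where, writing $T_2,N,M$ for $T_{2,n}(2,0),N_n(2,0),M_n(2,0)$, $$T_{2,n+1}(2,0)=-T_2^3+6T_2^2N+3T_2N^2,$$ $$N_{n+1}(2,0)=-T_2^2N+T_2^2M+7T_2N^2+2T_2NM+4N^3+N^2M,$$ $$M_{n+1}(2,0)=-3T_2N^2+12T_2NM+3T_2M^2+13N^3+24N^2M+9NM^2+M^3,$$ with $T_{2,1}(2,0)=2$, $N_1(2,0)=M_1(2,0)=1$.
   Context: Graphs are finite; multiple edges are allowed. For a graph $G$, a spanning subgraph $A$ has vertex set $V(G)$ and edge set $E(A)\subseteq E(G)$; $k(A)$ is its number of components, $r(A)=|V(G)|-k(A)$, $n(A)=|E(A)|-r(A)$; the weight of $A$ is $(x-1)^{r(G)-r(A)}(y-1)^{n(A)}$ and the Tutte polynomial $T(G;x,y)$ is the sum of the weights of all spanning subgraphs. Sierpiński graphs $\Gamma_n$ ($n\ge1$), each with three outmost vertices top, left, right: $\Gamma_1$ is the triangle $K_3$; $\Gamma_{n+1}$ is obtained from three disjoint copies $G_1,G_2,G_3$ of $\Gamma_n$ by identifying left$(G_1)$ with top$(G_2)$, right$(G_1)$ with top$(G_3)$, right$(G_2)$ with left$(G_3)$; its outmost vertices are top$(G_1)$, left$(G_2)$, right$(G_3)$.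 $T_n=T(\Gamma_n;x,y)$. $T_{2,n}$ (resp. $T_{1,n}$, $T_{0,n}$) is the sum of the weights of the spanning subgraphs of $\Gamma_n$ in which the three outmost vertices lie in one component (resp. left and right outmost in one component, top in another; resp. the three in three distinct components). $N_n(x,y)=T_{1,n}/(x-1)$ and $M_n(x,y)=T_{0,n}/(x-1)^2$, which are polynomials. An acyclic orientation is an orientation of all edges with no directed cycle. *)

theory Defs
  imports Complex_Main
begin

text \<open>Edge i (for i < length (edges G)) joins fst (edges G ! i) and snd (edges G ! i);
  edges are identified by their index, so multiple edges are allowed.\<close>

record sgraph =
  verts :: "nat set"
  edges :: "(nat \<times> nat) list"
  topv :: nat
  leftv :: nat
  rightv :: nat

definition edge_ids :: "sgraph \<Rightarrow> nat set" where
  "edge_ids G = {..<length (edges G)}"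

definition triangle :: sgraph where
  "triangle = \<lparr>verts = {0,1,2}, edges = [(0,1),(0,2),(1,2)],
               topv = 0, leftv = 1, rightv = 2\<rparr>"

text \<open>Copy j (j = 0,1,2) of G uses vertex 3*v+j for vertex v of G. Then
  left(G1) is identified with top(G2), right(G1) with top(G3), right(G2) with left(G3).\<close>

definition copyv :: "nat \<Rightarrow> nat \<Rightarrow> nat" where
  "copyv j v = 3 * v + j"

definition identify :: "sgraph \<Rightarrow> nat \<Rightarrow> nat" where
  "identify G w =
     (if w = copyv 0 (leftv G) then copyv 1 (topv G)
      else if w = copyv 0 (rightv G) then copyv 2 (topv G)
      else if w = copyv 1 (rightv G) then copyv 2 (leftv G)
      else w)"

definition sier_step :: "sgraph \<Rightarrow> sgraph" where
  "sier_step G =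
     \<lparr>verts = identify G ` (\<Union>j\<in>{0,1,2}. copyv j ` verts G),
      edges = concat (map (\<lambda>j. map (\<lambda>(u,v). (identify G (copyv j u), identify G (copyv j v)))
                                   (edges G)) [0,1,2]),
      topv = identify G (copyv 0 (topv G)),
      leftv = identify G (copyv 1 (leftv G)),
      rightv = identify G (copyv 2 (rightv G))\<rparr>"

primrec gamma_aux :: "nat \<Rightarrow> sgraph" where
  "gamma_aux 0 = triangle"
| "gamma_aux (Suc k) = sier_step (gamma_aux k)"

text \<open>Gamma n for n \<ge> 1 (Gamma 0 is an irrelevant default).\<close>
definition Gamma :: "nat \<Rightarrow> sgraph" where
  "Gamma n = gamma_aux (n - 1)"

definition edge_rel :: "sgraph \<Rightarrow> nat set \<Rightarrow> (nat \<times> nat) set" where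
  "edge_rel G A = {(u,v). \<exists>i\<in>A. i < length (edges G) \<and>
                      (edges G ! i = (u,v) \<or> edges G ! i = (v,u))}"

definition conn :: "sgraph \<Rightarrow> nat set \<Rightarrow> (nat \<times> nat) set" where
  "conn G A = (edge_rel G A)\<^sup>*"

definition ncomp :: "sgraph \<Rightarrow> nat set \<Rightarrow> nat" where
  "ncomp G A = card ((\<lambda>v. conn G A `` {v}) ` verts G)"

definition rk :: "sgraph \<Rightarrow> nat set \<Rightarrow> nat" where
  "rk G A = card (verts G) - ncomp G A"

definition nul :: "sgraph \<Rightarrow> nat set \<Rightarrow> nat" where
  "nul G A = card A - rk G A"

definition tweight :: "sgraph \<Rightarrow> real \<Rightarrow> real \<Rightarrow> nat set \<Rightarrow> real" where
  "tweight G x y A = (x - 1) ^ (rk G (edge_ids G) - rk G A) * (y - 1) ^ (nul G A)"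

definition tutte :: "sgraph \<Rightarrow> real \<Rightarrow> real \<Rightarrow> real" where
  "tutte G x y = (\<Sum>A\<in>Pow (edge_ids G). tweight G x y A)"

definition tutte2 :: "sgraph \<Rightarrow> real \<Rightarrow> real \<Rightarrow> real" where
  "tutte2 G x y = (\<Sum>A\<in>{A\<in>Pow (edge_ids G).
       (topv G, leftv G) \<in> conn G A \<and> (topv G, rightv G) \<in> conn G A}. tweight G x y A)"

definition tutte1 :: "sgraph \<Rightarrow> real \<Rightarrow> real \<Rightarrow> real" where
  "tutte1 G x y = (\<Sum>A\<in>{A\<in>Pow (edge_ids G).
       (leftv G, rightv G) \<in> conn G A \<and> (topv G, leftv G) \<notin> conn G A}. tweight G x y A)"

definition tutte0 :: "sgraph \<Rightarrow> real \<Rightarrow> real \<Rightarrow> real" where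
  "tutte0 G x y = (\<Sum>A\<in>{A\<in>Pow (edge_ids G).
       (topv G, leftv G) \<notin> conn G A \<and> (topv G, rightv G) \<notin> conn G A
       \<and> (leftv G, rightv G) \<notin> conn G A}. tweight G x y A)"

definition NN :: "sgraph \<Rightarrow> real \<Rightarrow> real \<Rightarrow> real" where
  "NN G x y = tutte1 G x y / (x - 1)"

definition MM :: "sgraph \<Rightarrow> real \<Rightarrow> real \<Rightarrow> real" where
  "MM G x y = tutte0 G x y / (x - 1) ^ 2"

text \<open>Orientations: S is the set of edges oriented from snd to fst (the others from fst to snd).\<close>
definition arcs :: "sgraph \<Rightarrow> nat set \<Rightarrow> (nat \<times> nat) set" where
  "arcs G S = {(u,v). \<exists>i<length (edges G).
       (i \<notin> S \<and> edges G ! i = (u,v)) \<or> (i \<in> S \<and> edges G ! i = (v,u))}"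

definition acyclic_orientations :: "sgraph \<Rightarrow> nat set set" where
  "acyclic_orientations G = {S\<in>Pow (edge_ids G). acyclic (arcs G S)}"

end

theory Submission
  imports Defs
begin

definition gerel :: "(nat \<Rightarrow> nat \<times> nat) \<Rightarrow> nat set \<Rightarrow> (nat \<times> nat) set" where
  "gerel ends A = {(a,b). \<exists>i\<in>A. ends i = (a,b) \<or> ends i = (b,a)}"
definition gk :: "nat set \<Rightarrow> (nat \<Rightarrow> nat \<times> nat) \<Rightarrow> nat set \<Rightarrow> nat" where
  "gk V ends A = card ((\<lambda>v. (gerel ends A)\<^sup>* `` {v}) ` V)"
definition gnul :: "nat set \<Rightarrow> (nat \<Rightarrow> nat \<times> nat) \<Rightarrow> nat set \<Rightarrow> nat" where
  "gnul V ends A = card A - (card V - gk V ends A)"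
definition gT :: "nat set \<Rightarrow> nat set \<Rightarrow> (nat \<Rightarrow> nat \<times> nat) \<Rightarrow> real" where
  "gT V I ends = (\<Sum>A\<in>Pow I. (-1::real) ^ gnul V ends A)"
definition garcs :: "nat set \<Rightarrow> (nat \<Rightarrow> nat \<times> nat) \<Rightarrow> nat set \<Rightarrow> (nat \<times> nat) set" where
  "garcs I ends S = {(a,b). \<exists>i\<in>I. (i \<notin> S \<and> ends i = (a,b)) \<or> (i \<in> S \<and> ends i = (b,a))}"
definition gAO :: "nat set \<Rightarrow> (nat \<Rightarrow> nat \<times> nat) \<Rightarrow> nat set set" where
  "gAO I ends = {S\<in>Pow I. acyclic (garcs I ends S)}"

lemma kernel_card:
  assumes "\<forall>a\<in>X. \<forall>b\<in>X. h a = h b \<longleftrightarrow> g a = g b"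
  shows "card (h ` X) = card (g ` X)"
proof -
  let ?P = "(\<lambda>x. (h x, g x)) ` X"
  have i1: "inj_on fst ?P" using assms by (auto simp: inj_on_def)
  have i2: "inj_on snd ?P" using assms by (auto simp: inj_on_def)
  have "fst ` ?P = h ` X" by (auto simp: image_image)
  moreover have "snd ` ?P = g ` X" by (auto simp: image_image)
  ultimately show ?thesis using card_image[OF i1] card_image[OF i2] by simp
qed

lemma class_eq_iff:
  assumes "sym R"
  shows "(R\<^sup>* `` {a} = R\<^sup>* `` {b}) \<longleftrightarrow> (a,b) \<in> R\<^sup>*"
proof
  assume "R\<^sup>* `` {a} = R\<^sup>* `` {b}"
  then have "b \<in> R\<^sup>* `` {a}" by auto
  then show "(a,b) \<in> R\<^sup>*" by auto
next
  assume ab: "(a,b) \<in> R\<^sup>*"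
  have s: "sym (R\<^sup>*)" using sym_rtrancl[OF assms] .
  have ba: "(b,a) \<in> R\<^sup>*" using s ab by (auto dest: symD)
  show "R\<^sup>* `` {a} = R\<^sup>* `` {b}"
    using ab ba by (auto intro: rtrancl_trans)
qed

lemma sym_gerel: "sym (gerel ends A)"
  by (auto simp: gerel_def sym_def)

lemma merge_rtrancl:
  "((f a, f b) \<in> (map_prod f f ` R)\<^sup>*) \<longleftrightarrow> (a,b) \<in> (R \<union> {(x,y). f x = f y})\<^sup>*"
proof
  assume "(f a, f b) \<in> (map_prod f f ` R)\<^sup>*"
  then have "\<forall>b'. f b' = f b \<longrightarrow> (a,b') \<in> (R \<union> {(x,y). f x = f y})\<^sup>*"
  proof (induction rule: rtrancl_induct)
    case base
    then show ?case by auto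
  next
    case (step y z)
    from step.hyps(2) obtain c d where cd: "(c,d) \<in> R" "y = f c" "z = f d" by auto
    show ?case
    proof (intro allI impI)
      fix b' assume b': "f b' = z"
      have "(a,c) \<in> (R \<union> {(x,y). f x = f y})\<^sup>*" using step.IH cd by auto
      moreover have "(c,d) \<in> (R \<union> {(x,y). f x = f y})\<^sup>*" using cd by auto
      moreover have "(d,b') \<in> (R \<union> {(x,y). f x = f y})\<^sup>*" using cd b' by auto
      ultimately show "(a,b') \<in> (R \<union> {(x,y). f x = f y})\<^sup>*" by (meson rtrancl_trans)
    qed
  qed
  then show "(a,b) \<in> (R \<union> {(x,y). f x = f y})\<^sup>*" by auto
next
  assume "(a,b) \<in> (R \<union> {(x,y). f x = f y})\<^sup>*"
  then show "(f a, f b) \<in> (map_prod f f ` R)\<^sup>*"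
  proof (induction rule: rtrancl_induct)
    case base then show ?case by auto
  next
    case (step y z)
    then show ?case
    proof (cases "(y,z) \<in> R")
      case True
      then have "(f y, f z) \<in> map_prod f f ` R" by force
      then show ?thesis using step.IH by (meson rtrancl.rtrancl_into_rtrancl)
    next
      case False
      then have "f y = f z" using step.hyps(2) by auto
      then show ?thesis using step.IH by simp
    qed
  qed
qed

lemma rtrancl_add_pair:
  assumes "sym R"
  shows "(R \<union> {(x,y),(y,x)})\<^sup>* = R\<^sup>* \<union> {(a,b). ((a,x) \<in> R\<^sup>* \<and> (y,b) \<in> R\<^sup>*) \<or> ((a,y) \<in> R\<^sup>* \<and> (x,b) \<in> R\<^sup>*)}"
  (is "?L = ?R")
proof
  have s: "sym (R\<^sup>*)" using sym_rtrancl[OF assms] .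
  have sy: "(p,q) \<in> R\<^sup>* \<Longrightarrow> (q,p) \<in> R\<^sup>*" for p q using s by (auto dest: symD)
  show "?L \<subseteq> ?R"
  proof
    fix p assume "p \<in> ?L"
    then obtain a b where p: "p = (a,b)" and ab: "(a,b) \<in> ?L" by (cases p) auto
    from ab have "(a,b) \<in> ?R"
    proof (induction rule: rtrancl_induct)
      case base then show ?case by auto
    next
      case (step c d)
      from step.hyps(2) have "(c,d) \<in> R \<or> (c,d) = (x,y) \<or> (c,d) = (y,x)" by auto
      then show ?case
      proof (elim disjE)
        assume cd: "(c,d) \<in> R"
        with step.IH show ?thesis by (auto intro: rtrancl_into_rtrancl)
      next
        assume cd: "(c,d) = (x,y)"
        with step.IH sy show ?thesis by (auto intro: rtrancl_trans)
      next
        assume cd: "(c,d) = (y,x)"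
        with step.IH sy show ?thesis by (auto intro: rtrancl_trans)
      qed
    qed
    then show "p \<in> ?R" using p by simp
  qed
next
  have m: "R\<^sup>* \<subseteq> ?L" by (rule rtrancl_mono) auto
  have xy: "(x,y) \<in> ?L" "(y,x) \<in> ?L" by auto
  show "?R \<subseteq> ?L"
  proof
    fix p assume "p \<in> ?R"
    then show "p \<in> ?L" using m xy by (auto intro: rtrancl_trans)
  qed
qed

lemma sum_Pow_insert:
  assumes "finite I" "e \<notin> I"
  shows "(\<Sum>A\<in>Pow (insert e I). F A) = (\<Sum>A\<in>Pow I. F A) + (\<Sum>A\<in>Pow I. F (insert e A))"
proof -
  have d: "Pow I \<inter> insert e ` Pow I = {}" using assms(2) by auto
  have inj: "inj_on (insert e) (Pow I)" using assms(2) unfolding inj_on_def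
    by (metis PowD insert_absorb insert_ident subset_iff)
  have "(\<Sum>A\<in>Pow (insert e I). F A) = (\<Sum>A\<in>Pow I \<union> insert e ` Pow I. F A)"
    by (simp add: Pow_insert)
  also have "\<dots> = (\<Sum>A\<in>Pow I. F A) + (\<Sum>A\<in>insert e ` Pow I. F A)"
    using assms(1) d by (intro sum.union_disjoint) auto
  also have "(\<Sum>A\<in>insert e ` Pow I. F A) = (\<Sum>A\<in>Pow I. F (insert e A))"
    using sum.reindex[OF inj] by simp
  finally show ?thesis .
qed

lemma gerel_insert: "ends e = (u,v) \<Longrightarrow> gerel ends (insert e A) = gerel ends A \<union> {(u,v),(v,u)}"
  by (auto simp: gerel_def)

lemma gerel_comp: "gerel (\<lambda>i. map_prod f f (ends i)) A = map_prod f f ` gerel ends A"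
proof
  show "gerel (\<lambda>i. map_prod f f (ends i)) A \<subseteq> map_prod f f ` gerel ends A"
  proof
    fix p assume "p \<in> gerel (\<lambda>i. map_prod f f (ends i)) A"
    then obtain i where i: "i \<in> A" "map_prod f f (ends i) = p \<or> map_prod f f (ends i) = prod.swap p"
      by (auto simp: gerel_def)
    obtain c d where cd: "ends i = (c,d)" by (cases "ends i")
    show "p \<in> map_prod f f ` gerel ends A"
    proof (cases "map_prod f f (ends i) = p")
      case True
      then show ?thesis using i cd by (force simp: gerel_def)
    next
      case False
      then have "p = (f d, f c)" using i cd by (cases p) auto
      moreover have "(d,c) \<in> gerel ends A" using i cd by (auto simp: gerel_def)
      ultimately show ?thesis by force
    qed
  qed
next
  show "map_prod f f ` gerel ends A \<subseteq> gerel (\<lambda>i. map_prod f f (ends i)) A"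
    by (force simp: gerel_def)
qed

lemma gk_empty: "gk V ends {} = card V"
proof -
  have "gerel ends {} = {}" by (simp add: gerel_def)
  then have "(\<lambda>v. (gerel ends {})\<^sup>* `` {v}) = (\<lambda>v. {v})" by auto
  moreover have "inj_on (\<lambda>v. {v}) V" by (auto simp: inj_on_def)
  ultimately show ?thesis by (simp add: gk_def card_image)
qed

lemma gk_le: "finite V \<Longrightarrow> gk V ends A \<le> card V"
  by (simp add: gk_def card_image_le)

lemma kernel_contract:
  assumes "u \<noteq> v"
  shows "{(x,y). (if x = v then u else x) = (if y = v then u else y)} = Id \<union> {(u,v),(v,u)}"
  using assms by (auto split: if_splits)

lemma contract_rtrancl:
  assumes "u \<noteq> v" "a \<noteq> v" "b \<noteq> v"
  shows "(a,b) \<in> (map_prod (\<lambda>w. if w = v then u else w) (\<lambda>w. if w = v then u else w) ` R)\<^sup>*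
     \<longleftrightarrow> (a,b) \<in> (R \<union> {(u,v),(v,u)})\<^sup>*"
proof -
  let ?f = "\<lambda>w. if w = v then u else w"
  have "(?f a, ?f b) \<in> (map_prod ?f ?f ` R)\<^sup>* \<longleftrightarrow> (a,b) \<in> (R \<union> {(x,y). ?f x = ?f y})\<^sup>*"
    by (rule merge_rtrancl)
  moreover have k: "R \<union> {(x,y). ?f x = ?f y} = (R \<union> {(u,v),(v,u)})\<^sup>="
    using kernel_contract[OF assms(1)] by auto
  moreover have "(R \<union> {(x,y). ?f x = ?f y})\<^sup>* = (R \<union> {(u,v),(v,u)})\<^sup>*"
    unfolding k by (rule rtrancl_reflcl)
  ultimately show ?thesis using assms by (simp only: if_False)
qed

lemma contract_gk:
  assumes uv: "u \<noteq> v" "u \<in> V" "v \<in> V" and e: "ends e = (u,v)" and fin: "finite V"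
  shows "gk (V - {v}) (\<lambda>i. map_prod (\<lambda>w. if w = v then u else w) (\<lambda>w. if w = v then u else w) (ends i)) A
           = gk V ends (insert e A)"
    and "gk V ends (insert e A) < card V"
proof -
  let ?f = "\<lambda>w. if w = v then u else w"
  let ?R = "gerel ends A"
  let ?R2 = "gerel ends (insert e A)"
  let ?R' = "gerel (\<lambda>i. map_prod ?f ?f (ends i)) A"
  have R2: "?R2 = ?R \<union> {(u,v),(v,u)}" using e by (rule gerel_insert)
  have R': "?R' = map_prod ?f ?f ` ?R" by (rule gerel_comp)
  have sR': "sym ?R'" by (rule sym_gerel)
  have sR2: "sym ?R2" by (rule sym_gerel)
  have ker: "\<forall>a\<in>V - {v}. \<forall>b\<in>V - {v}. (?R'\<^sup>* `` {a} = ?R'\<^sup>* `` {b}) \<longleftrightarrow> (?R2\<^sup>* `` {a} = ?R2\<^sup>* `` {b})"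
  proof (intro ballI)
    fix a b assume a: "a \<in> V - {v}" and b: "b \<in> V - {v}"
    have "(?R'\<^sup>* `` {a} = ?R'\<^sup>* `` {b}) \<longleftrightarrow> (a,b) \<in> ?R'\<^sup>*" by (rule class_eq_iff[OF sR'])
    also have "\<dots> \<longleftrightarrow> (a,b) \<in> ?R2\<^sup>*" unfolding R' R2
      using contract_rtrancl[OF uv(1)] a b by auto
    also have "\<dots> \<longleftrightarrow> (?R2\<^sup>* `` {a} = ?R2\<^sup>* `` {b})" by (rule class_eq_iff[OF sR2, symmetric])
    finally show "(?R'\<^sup>* `` {a} = ?R'\<^sup>* `` {b}) \<longleftrightarrow> (?R2\<^sup>* `` {a} = ?R2\<^sup>* `` {b})" .
  qed
  have c1: "gk (V - {v}) (\<lambda>i. map_prod ?f ?f (ends i)) A = card ((\<lambda>w. ?R2\<^sup>* `` {w}) ` (V - {v}))"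
    unfolding gk_def by (rule kernel_card[OF ker])
  have uv2: "(u,v) \<in> ?R2\<^sup>*" using R2 by auto
  have eqc: "?R2\<^sup>* `` {v} = ?R2\<^sup>* `` {u}" using class_eq_iff[OF sR2] uv2 by (metis sR2 sym_rtrancl symD)
  have img: "(\<lambda>w. ?R2\<^sup>* `` {w}) ` (V - {v}) = (\<lambda>w. ?R2\<^sup>* `` {w}) ` V"
  proof
    show "(\<lambda>w. ?R2\<^sup>* `` {w}) ` V \<subseteq> (\<lambda>w. ?R2\<^sup>* `` {w}) ` (V - {v})"
    proof
      fix C assume "C \<in> (\<lambda>w. ?R2\<^sup>* `` {w}) ` V"
      then obtain w where w: "w \<in> V" "C = ?R2\<^sup>* `` {w}" by auto
      show "C \<in> (\<lambda>w. ?R2\<^sup>* `` {w}) ` (V - {v})"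
      proof (cases "w = v")
        case True then show ?thesis using w eqc uv by auto
      next
        case False then show ?thesis using w by auto
      qed
    qed
  qed auto
  show "gk (V - {v}) (\<lambda>i. map_prod ?f ?f (ends i)) A = gk V ends (insert e A)"
    using c1 img by (simp add: gk_def)
  have "card ((\<lambda>w. ?R2\<^sup>* `` {w}) ` (V - {v})) \<le> card (V - {v})" using fin by (simp add: card_image_le)
  also have "\<dots> < card V" by (rule card_Diff1_less[OF fin uv(3)])
  finally show "gk V ends (insert e A) < card V" using img by (simp add: gk_def)
qed

lemma trancl_image: "(x,y) \<in> R\<^sup>+ \<Longrightarrow> (f x, f y) \<in> (map_prod f f ` R)\<^sup>+"
proof (induction rule: trancl_induct)
  case (base y) then show ?case by force
next
  case (step y z)
  then have "(f y, f z) \<in> map_prod f f ` R" by force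
  then show ?case using step.IH by (meson trancl.trancl_into_trancl)
qed

lemma acyclic_contract:
  assumes uv: "u \<noteq> v"
  shows "acyclic (map_prod (\<lambda>w. if w = v then u else w) (\<lambda>w. if w = v then u else w) ` R)
     \<longleftrightarrow> acyclic R \<and> (u,v) \<notin> R\<^sup>* \<and> (v,u) \<notin> R\<^sup>*"
proof -
  let ?f = "\<lambda>w. if w = v then u else w"
  let ?Q = "map_prod ?f ?f ` R"
  show ?thesis
  proof
    assume aQ: "acyclic ?Q"
    have "acyclic R"
      unfolding acyclic_def
    proof
      fix x show "(x,x) \<notin> R\<^sup>+"
        using trancl_image[of x x R ?f] aQ unfolding acyclic_def by blast
    qed
    moreover have "(u,v) \<notin> R\<^sup>*"
    proof
      assume "(u,v) \<in> R\<^sup>*"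
      then have "(u,v) \<in> R\<^sup>+" using uv by (meson rtranclD)
      then have "(?f u, ?f v) \<in> ?Q\<^sup>+" by (rule trancl_image)
      then show False using aQ uv unfolding acyclic_def by auto
    qed
    moreover have "(v,u) \<notin> R\<^sup>*"
    proof
      assume "(v,u) \<in> R\<^sup>*"
      then have "(v,u) \<in> R\<^sup>+" using uv by (metis rtranclD)
      then have "(?f v, ?f u) \<in> ?Q\<^sup>+" by (rule trancl_image)
      then show False using aQ uv unfolding acyclic_def by auto
    qed
    ultimately show "acyclic R \<and> (u,v) \<notin> R\<^sup>* \<and> (v,u) \<notin> R\<^sup>*" by blast
  next
    assume H: "acyclic R \<and> (u,v) \<notin> R\<^sup>* \<and> (v,u) \<notin> R\<^sup>*"
    have inc: "\<And>p q. p \<in> {u,v} \<Longrightarrow> q \<in> {u,v} \<Longrightarrow> p \<noteq> q \<Longrightarrow> (p,q) \<notin> R\<^sup>*" using H by auto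
    have nc: "\<And>p. (p,p) \<notin> R\<^sup>+" using H unfolding acyclic_def by auto
    define P where "P x y \<longleftrightarrow> (\<exists>a b. ?f a = x \<and> ?f b = y \<and> ((a,b) \<in> R\<^sup>+ \<or>
        (\<exists>c d. c \<in> {u,v} \<and> d \<in> {u,v} \<and> (a,c) \<in> R\<^sup>* \<and> (d,b) \<in> R\<^sup>* \<and> ((a,c) \<in> R\<^sup>+ \<or> (d,b) \<in> R\<^sup>+))))" for x y
    have inv: "P x y" if "(x,y) \<in> ?Q\<^sup>+" for x y
      using that
    proof (induction rule: trancl_induct)
      case (base y)
      then obtain a b where "(a,b) \<in> R" "x = ?f a" "y = ?f b" by auto
      then show ?case unfolding P_def by blast
    next
      case (step y z)
      from step.hyps(2) obtain c' d' where cd: "(c',d') \<in> R" "y = ?f c'" "z = ?f d'" by auto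
      from step.IH obtain a b where ab: "?f a = x" "?f b = y" and
        disj: "(a,b) \<in> R\<^sup>+ \<or> (\<exists>c d. c \<in> {u,v} \<and> d \<in> {u,v} \<and> (a,c) \<in> R\<^sup>* \<and> (d,b) \<in> R\<^sup>* \<and> ((a,c) \<in> R\<^sup>+ \<or> (d,b) \<in> R\<^sup>+))"
        unfolding P_def by blast
      have fbc: "?f b = ?f c'" using ab cd by simp
      have bc: "b = c' \<or> (b \<in> {u,v} \<and> c' \<in> {u,v})" using fbc by (auto split: if_splits)
      from disj show ?case
      proof
        assume abR: "(a,b) \<in> R\<^sup>+"
        from bc show ?thesis
        proof
          assume "b = c'"
          then have "(a,d') \<in> R\<^sup>+" using abR cd by (meson trancl.trancl_into_trancl)
          then show ?thesis unfolding P_def using ab cd by blast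
        next
          assume "b \<in> {u,v} \<and> c' \<in> {u,v}"
          moreover have "(c',d') \<in> R\<^sup>*" using cd by auto
          ultimately show ?thesis unfolding P_def using ab cd abR
            by (metis trancl_into_rtrancl)
        qed
      next
        assume "\<exists>c d. c \<in> {u,v} \<and> d \<in> {u,v} \<and> (a,c) \<in> R\<^sup>* \<and> (d,b) \<in> R\<^sup>* \<and> ((a,c) \<in> R\<^sup>+ \<or> (d,b) \<in> R\<^sup>+)"
        then obtain c d where c: "c \<in> {u,v}" "d \<in> {u,v}" "(a,c) \<in> R\<^sup>*" "(d,b) \<in> R\<^sup>*" by blast
        from bc show ?thesis
        proof
          assume "b = c'"
          then have "(d,d') \<in> R\<^sup>+" using c cd by (meson rtrancl_into_trancl1)
          then show ?thesis unfolding P_def using ab cd c by (metis trancl_into_rtrancl)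
        next
          assume "b \<in> {u,v} \<and> c' \<in> {u,v}"
          moreover have "(c',d') \<in> R\<^sup>+" using cd by auto
          ultimately show ?thesis unfolding P_def using ab cd c by (metis trancl_into_rtrancl)
        qed
      qed
    qed
    show "acyclic ?Q"
      unfolding acyclic_def
    proof
      fix x show "(x,x) \<notin> ?Q\<^sup>+"
      proof
        assume "(x,x) \<in> ?Q\<^sup>+"
        then have "P x x" by (rule inv)
        then obtain a b where ab: "?f a = x" "?f b = x" and
          disj: "(a,b) \<in> R\<^sup>+ \<or> (\<exists>c d. c \<in> {u,v} \<and> d \<in> {u,v} \<and> (a,c) \<in> R\<^sup>* \<and> (d,b) \<in> R\<^sup>* \<and> ((a,c) \<in> R\<^sup>+ \<or> (d,b) \<in> R\<^sup>+))"
          unfolding P_def by blast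
        have abeq: "a = b \<or> (a \<in> {u,v} \<and> b \<in> {u,v} \<and> a \<noteq> b)" using ab by (auto split: if_splits)
        from disj show False
        proof
          assume "(a,b) \<in> R\<^sup>+"
          then show False using abeq nc inc by (metis trancl_into_rtrancl)
        next
          assume "\<exists>c d. c \<in> {u,v} \<and> d \<in> {u,v} \<and> (a,c) \<in> R\<^sup>* \<and> (d,b) \<in> R\<^sup>* \<and> ((a,c) \<in> R\<^sup>+ \<or> (d,b) \<in> R\<^sup>+)"
          then obtain c d where c: "c \<in> {u,v}" "d \<in> {u,v}" "(a,c) \<in> R\<^sup>*" "(d,b) \<in> R\<^sup>*"
             and pl: "(a,c) \<in> R\<^sup>+ \<or> (d,b) \<in> R\<^sup>+" by blast
          from abeq show False
          proof
            assume "a = b"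
            then have "(d,c) \<in> R\<^sup>+" using c pl
              by (meson rtrancl_trancl_trancl trancl_rtrancl_trancl)
            then show False using c nc inc by (metis trancl_into_rtrancl)
          next
            assume ab2: "a \<in> {u,v} \<and> b \<in> {u,v} \<and> a \<noteq> b"
            have "a = c" using inc ab2 c by blast
            moreover have "d = b" using inc ab2 c by blast
            ultimately show False using pl nc by blast
          qed
        qed
      qed
    qed
  qed
qed

lemma garcs_ins_notin:
  assumes "e \<notin> I" "S \<subseteq> I" "ends e = (u,v)"
  shows "garcs (insert e I) ends S = insert (u,v) (garcs I ends S)"
  using assms by (auto simp: garcs_def)

lemma garcs_ins_in:
  assumes "e \<notin> I" "S \<subseteq> I" "ends e = (u,v)"
  shows "garcs (insert e I) ends (insert e S) = insert (v,u) (garcs I ends S)"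
  using assms by (auto simp: garcs_def)

lemma garcs_comp: "garcs I (\<lambda>i. map_prod f f (ends i)) S = map_prod f f ` garcs I ends S"
proof
  show "garcs I (\<lambda>i. map_prod f f (ends i)) S \<subseteq> map_prod f f ` garcs I ends S"
  proof
    fix p assume "p \<in> garcs I (\<lambda>i. map_prod f f (ends i)) S"
    then obtain i where i: "i \<in> I" "(i \<notin> S \<and> map_prod f f (ends i) = p) \<or> (i \<in> S \<and> map_prod f f (ends i) = prod.swap p)"
      by (auto simp: garcs_def)
    obtain c d where cd: "ends i = (c,d)" by (cases "ends i")
    show "p \<in> map_prod f f ` garcs I ends S"
    proof (cases "i \<in> S")
      case False
      then show ?thesis using i cd by (force simp: garcs_def)
    next
      case True
      then have "p = (f d, f c)" using i cd by (cases p) auto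
      moreover have "(d,c) \<in> garcs I ends S" using i cd True by (auto simp: garcs_def)
      ultimately show ?thesis by force
    qed
  qed
next
  show "map_prod f f ` garcs I ends S \<subseteq> garcs I (\<lambda>i. map_prod f f (ends i)) S"
    by (force simp: garcs_def)
qed

lemma gAO_split:
  assumes fin: "finite I" and e: "e \<notin> I" and uv: "ends e = (u,v)"
  shows "card (gAO (insert e I) ends) =
     card {S\<in>Pow I. acyclic (insert (u,v) (garcs I ends S))} + card {S\<in>Pow I. acyclic (insert (v,u) (garcs I ends S))}"
proof -
  let ?X = "{S\<in>Pow I. acyclic (insert (u,v) (garcs I ends S))}"
  let ?Y = "{S\<in>Pow I. acyclic (insert (v,u) (garcs I ends S))}"
  have eq: "gAO (insert e I) ends = ?X \<union> insert e ` ?Y"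
  proof
    show "gAO (insert e I) ends \<subseteq> ?X \<union> insert e ` ?Y"
    proof
      fix S assume S: "S \<in> gAO (insert e I) ends"
      then have SI: "S \<subseteq> insert e I" and acS: "acyclic (garcs (insert e I) ends S)"
        by (simp_all add: gAO_def)
      show "S \<in> ?X \<union> insert e ` ?Y"
      proof (cases "e \<in> S")
        case False
        then have S0: "S \<subseteq> I" using SI by blast
        have "garcs (insert e I) ends S = insert (u,v) (garcs I ends S)"
          by (rule garcs_ins_notin[of e I S ends u v, OF e S0 uv])
        then have "S \<in> ?X" using S0 acS by simp
        then show ?thesis by blast
      next
        case True
        let ?S0 = "S - {e}"
        have S0: "?S0 \<subseteq> I" using SI by blast
        have Seq: "S = insert e ?S0" using True by blast
        have "garcs (insert e I) ends (insert e ?S0) = insert (v,u) (garcs I ends ?S0)"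
          by (rule garcs_ins_in[of e I ?S0 ends u v, OF e S0 uv])
        then have "?S0 \<in> ?Y" using S0 acS Seq by simp
        then show ?thesis using Seq by blast
      qed
    qed
  next
    show "?X \<union> insert e ` ?Y \<subseteq> gAO (insert e I) ends"
    proof
      fix S assume "S \<in> ?X \<union> insert e ` ?Y"
      then show "S \<in> gAO (insert e I) ends"
      proof
        assume SX: "S \<in> ?X"
        then have S0: "S \<subseteq> I" by simp
        have "garcs (insert e I) ends S = insert (u,v) (garcs I ends S)"
          by (rule garcs_ins_notin[of e I S ends u v, OF e S0 uv])
        then show ?thesis using SX S0 unfolding gAO_def by auto
      next
        assume "S \<in> insert e ` ?Y"
        then obtain S0 where SY: "S0 \<in> ?Y" and Seq: "S = insert e S0" by blast
        then have S0: "S0 \<subseteq> I" by simp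
        have "garcs (insert e I) ends (insert e S0) = insert (v,u) (garcs I ends S0)"
          by (rule garcs_ins_in[of e I S0 ends u v, OF e S0 uv])
        then show ?thesis using SY S0 Seq unfolding gAO_def by auto
      qed
    qed
  qed
  have d: "?X \<inter> insert e ` ?Y = {}" using e by auto
  have inj: "inj_on (insert e) ?Y"
  proof (rule inj_onI)
    fix A B assume "A \<in> ?Y" "B \<in> ?Y" "insert e A = insert e B"
    moreover have "e \<notin> A" "e \<notin> B" using calculation e by auto
    ultimately show "A = B" by (metis insert_ident)
  qed
  have f1: "finite ?X" using fin by auto
  have f2: "finite (insert e ` ?Y)" using fin by auto
  show ?thesis unfolding eq using card_Un_disjoint[OF f1 f2 d] card_image[OF inj] by simp
qed

lemma stanley_main:
  assumes "finite I"
  shows "\<forall>V ends. finite V \<and> (\<forall>i\<in>I. fst (ends i) \<in> V \<and> snd (ends i) \<in> V) \<longrightarrow>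
     real (card (gAO I ends)) = gT V I ends \<and> (\<forall>A\<subseteq>I. card V - gk V ends A \<le> card A)"
  using assms
proof (induction I rule: finite_induct)
  case empty
  show ?case
  proof (intro allI impI)
    fix V :: "nat set" and ends :: "nat \<Rightarrow> nat \<times> nat" assume "finite V \<and> (\<forall>i\<in>{}. fst (ends i) \<in> V \<and> snd (ends i) \<in> V)"
    have "garcs {} ends {} = {}" by (simp add: garcs_def)
    moreover have "acyclic ({}::(nat\<times>nat) set)" by (simp add: acyclic_def)
    ultimately have "gAO {} ends = {{}}" by (auto simp: gAO_def)
    moreover have "gT V {} ends = 1" by (simp add: gT_def gnul_def gk_empty)
    ultimately show "real (card (gAO {} ends)) = gT V {} ends \<and> (\<forall>A\<subseteq>{}. card V - gk V ends A \<le> card A)"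
      by (simp add: gk_empty)
  qed
next
  case (insert e I)
  show ?case
  proof (intro allI impI)
    fix V :: "nat set" and ends :: "nat \<Rightarrow> nat \<times> nat" assume wf: "finite V \<and> (\<forall>i\<in>insert e I. fst (ends i) \<in> V \<and> snd (ends i) \<in> V)"
    obtain u v where uv: "ends e = (u,v)" by (cases "ends e")
    have uV: "u \<in> V" and vV: "v \<in> V" using wf uv by (metis fst_conv insertI1, metis snd_conv insertI1)
    have finV: "finite V" using wf by simp
    have wfI: "finite V \<and> (\<forall>i\<in>I. fst (ends i) \<in> V \<and> snd (ends i) \<in> V)" using wf by simp
    have IH: "real (card (gAO I ends)) = gT V I ends" "\<forall>A\<subseteq>I. card V - gk V ends A \<le> card A"
      using insert.IH wfI by auto
    have splitT: "gT V (insert e I) ends = gT V I ends + (\<Sum>A\<in>Pow I. (-1::real) ^ gnul V ends (insert e A))"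
      unfolding gT_def by (rule sum_Pow_insert[OF insert.hyps(1,2)])
    show "real (card (gAO (insert e I) ends)) = gT V (insert e I) ends \<and>
          (\<forall>A\<subseteq>insert e I. card V - gk V ends A \<le> card A)"
    proof (cases "u = v")
      case True
      have rel: "gerel ends (insert e A) = gerel ends A \<union> {(u,u)}" for A
        using gerel_insert[of ends e u v A] uv True by auto
      have rt: "(gerel ends (insert e A))\<^sup>* = (gerel ends A)\<^sup>*" for A
      proof -
        have "gerel ends A \<union> {(u,u)} \<subseteq> (gerel ends A)\<^sup>=" by auto
        then have "(gerel ends A \<union> {(u,u)})\<^sup>* \<subseteq> (gerel ends A)\<^sup>*"
          by (metis rtrancl_mono rtrancl_reflcl)
        moreover have "(gerel ends A)\<^sup>* \<subseteq> (gerel ends A \<union> {(u,u)})\<^sup>*" by (rule rtrancl_mono) auto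
        ultimately show ?thesis using rel by auto
      qed
      have gkeq: "gk V ends (insert e A) = gk V ends A" for A by (simp add: gk_def rt)
      have T0: "gT V (insert e I) ends = 0"
      proof -
        have "(-1::real) ^ gnul V ends (insert e A) = - ((-1) ^ gnul V ends A)" if "A \<in> Pow I" for A
        proof -
          have "e \<notin> A" using that insert.hyps(2) by auto
          then have "card (insert e A) = card A + 1" using that insert.hyps(1)
            by (simp add: finite_subset)
          moreover have "card V - gk V ends A \<le> card A" using IH(2) that by auto
          ultimately have "gnul V ends (insert e A) = gnul V ends A + 1"
            by (simp add: gnul_def gkeq)
          then show ?thesis by simp
        qed
        then have "(\<Sum>A\<in>Pow I. (-1::real) ^ gnul V ends (insert e A)) = - (\<Sum>A\<in>Pow I. (-1::real) ^ gnul V ends A)"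
          by (simp add: sum_negf)
        then show ?thesis using splitT by (simp add: gT_def)
      qed
      have AO0: "gAO (insert e I) ends = {}"
      proof -
        have "(u,u) \<in> garcs (insert e I) ends S" for S using uv True by (auto simp: garcs_def)
        then have "\<not> acyclic (garcs (insert e I) ends S)" for S
          by (meson acyclic_def r_into_trancl')
        then show ?thesis by (auto simp: gAO_def)
      qed
      have rk: "\<forall>A\<subseteq>insert e I. card V - gk V ends A \<le> card A"
      proof (intro allI impI)
        fix A assume A: "A \<subseteq> insert e I"
        have "A - {e} \<subseteq> I" using A by auto
        then have "card V - gk V ends (A - {e}) \<le> card (A - {e})" using IH(2) by auto
        moreover have "gk V ends A = gk V ends (A - {e})"
          by (metis gkeq insert_Diff_single insert_absorb2)
        moreover have "card (A - {e}) \<le> card A" using A insert.hyps(1)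
          by (meson card_Diff1_le finite_insert finite_subset)
        ultimately show "card V - gk V ends A \<le> card A" by linarith
      qed
      show ?thesis using T0 AO0 rk by simp
    next
      case False
      define f where "f = (\<lambda>w. if w = v then u else w)"
      define ends' where "ends' = (\<lambda>i. map_prod f f (ends i))"
      define V' where "V' = V - {v}"
      have wf': "finite V' \<and> (\<forall>i\<in>I. fst (ends' i) \<in> V' \<and> snd (ends' i) \<in> V')"
        using wf False uV by (auto simp: ends'_def V'_def f_def)
      have IH': "real (card (gAO I ends')) = gT V' I ends'" "\<forall>A\<subseteq>I. card V' - gk V' ends' A \<le> card A"
        using insert.IH wf' by auto
      have cg: "gk V' ends' A = gk V ends (insert e A)" "gk V ends (insert e A) < card V" for A
        using contract_gk[of u v V ends e A, OF False uV vV uv finV] by (simp_all add: ends'_def V'_def f_def)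
      have cV': "card V' = card V - 1" using finV vV by (simp add: V'_def)
      have nul: "gnul V ends (insert e A) = gnul V' ends' A" if "A \<in> Pow I" for A
      proof -
        have "e \<notin> A" using that insert.hyps(2) by auto
        then have "card (insert e A) = card A + 1" using that insert.hyps(1)
          by (simp add: finite_subset)
        then show ?thesis using cg[of A] cV' by (simp add: gnul_def)
      qed
      have T: "gT V (insert e I) ends = gT V I ends + gT V' I ends'"
        using splitT nul by (simp add: gT_def)
      have AO: "card (gAO (insert e I) ends) = card (gAO I ends) + card (gAO I ends')"
      proof -
        let ?X = "{S\<in>Pow I. acyclic (insert (u,v) (garcs I ends S))}"
        let ?Y = "{S\<in>Pow I. acyclic (insert (v,u) (garcs I ends S))}"
        have s: "card (gAO (insert e I) ends) = card ?X + card ?Y"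
          by (rule gAO_split[of I e ends u v, OF insert.hyps(1,2) uv])
        have un: "?X \<union> ?Y = gAO I ends"
        proof
          show "gAO I ends \<subseteq> ?X \<union> ?Y"
          proof
            fix S assume S: "S \<in> gAO I ends"
            then have ac: "acyclic (garcs I ends S)" by (simp add: gAO_def)
            have "(v,u) \<notin> (garcs I ends S)\<^sup>* \<or> (u,v) \<notin> (garcs I ends S)\<^sup>*"
            proof (rule ccontr)
              assume "\<not> ?thesis"
              then have a1: "(u,v) \<in> (garcs I ends S)\<^sup>+" and a2: "(v,u) \<in> (garcs I ends S)\<^sup>*"
                using False by (auto dest: rtranclD)
              then have "(u,u) \<in> (garcs I ends S)\<^sup>+" by (rule trancl_rtrancl_trancl)
              then show False using ac by (simp add: acyclic_def)
            qed
            then show "S \<in> ?X \<union> ?Y" using S ac by (auto simp: gAO_def)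
          qed
        qed (auto simp: gAO_def)
        have int: "?X \<inter> ?Y = gAO I ends'"
          using acyclic_contract[OF False, of "garcs I ends _"]
          by (auto simp: gAO_def ends'_def garcs_comp f_def)
        have fX: "finite ?X" "finite ?Y" using insert.hyps(1) by auto
        have "card ?X + card ?Y = card (?X \<union> ?Y) + card (?X \<inter> ?Y)" by (rule card_Un_Int[OF fX])
        then show ?thesis using s un int by simp
      qed
      have rk: "\<forall>A\<subseteq>insert e I. card V - gk V ends A \<le> card A"
      proof (intro allI impI)
        fix A assume A: "A \<subseteq> insert e I"
        show "card V - gk V ends A \<le> card A"
        proof (cases "e \<in> A")
          case False
          then show ?thesis using A IH(2) by auto
        next
          case True
          let ?A0 = "A - {e}"
          have A0: "?A0 \<subseteq> I" using A by auto
          have ins: "A = insert e ?A0" using True by auto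
          have fA0: "finite ?A0" using A0 insert.hyps(1) by (rule finite_subset)
          have "card A = card ?A0 + 1" using ins fA0 by (metis card_insert_disjoint Diff_iff insertI1 Suc_eq_plus1)
          moreover have "card V' - gk V' ends' ?A0 \<le> card ?A0" using IH'(2) A0 by auto
          moreover have "gk V' ends' ?A0 = gk V ends A" using cg[of ?A0] ins by simp
          ultimately show ?thesis using cV' by linarith
        qed
      qed
      show ?thesis using T AO IH IH' rk by simp
    qed
  qed
qed

theorem stanley:
  assumes "finite I" "finite V" "\<forall>i\<in>I. fst (ends i) \<in> V \<and> snd (ends i) \<in> V"
  shows "real (card (gAO I ends)) = gT V I ends"
    and "\<And>A. A \<subseteq> I \<Longrightarrow> card V - gk V ends A \<le> card A"
  using stanley_main[OF assms(1)] assms(2,3) by auto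

definition wfg :: "sgraph \<Rightarrow> bool" where
  "wfg G \<longleftrightarrow> finite (verts G) \<and> (\<forall>i<length (edges G). fst (edges G ! i) \<in> verts G \<and> snd (edges G ! i) \<in> verts G)
     \<and> topv G \<in> verts G \<and> leftv G \<in> verts G \<and> rightv G \<in> verts G
     \<and> topv G \<noteq> leftv G \<and> topv G \<noteq> rightv G \<and> leftv G \<noteq> rightv G \<and> 0 < length (edges G)"

lemma edge_rel_gerel: "A \<subseteq> edge_ids G \<Longrightarrow> edge_rel G A = gerel (\<lambda>i. edges G ! i) A"
  by (auto simp: edge_rel_def gerel_def edge_ids_def)

lemma conn_gerel: "A \<subseteq> edge_ids G \<Longrightarrow> conn G A = (gerel (\<lambda>i. edges G ! i) A)\<^sup>*"
  by (simp add: conn_def edge_rel_gerel)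

lemma ncomp_gk: "A \<subseteq> edge_ids G \<Longrightarrow> ncomp G A = gk (verts G) (\<lambda>i. edges G ! i) A"
  by (simp add: ncomp_def gk_def conn_gerel)

lemma nul_gnul: "A \<subseteq> edge_ids G \<Longrightarrow> nul G A = gnul (verts G) (\<lambda>i. edges G ! i) A"
  by (simp add: nul_def rk_def gnul_def ncomp_gk)

lemma tweight20: "tweight G 2 0 A = (-1) ^ nul G A"
  by (simp add: tweight_def)

lemma tutte20: "tutte G 2 0 = gT (verts G) (edge_ids G) (\<lambda>i. edges G ! i)"
  unfolding tutte_def gT_def tweight20
  by (rule sum.cong) (auto simp: nul_gnul)

lemma arcs_garcs: "arcs G S = garcs (edge_ids G) (\<lambda>i. edges G ! i) S"
  by (auto simp: arcs_def garcs_def edge_ids_def)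

lemma AO_eq_tutte:
  assumes "wfg G"
  shows "real (card (acyclic_orientations G)) = tutte G 2 0"
proof -
  have "acyclic_orientations G = gAO (edge_ids G) (\<lambda>i. edges G ! i)"
    by (simp add: acyclic_orientations_def gAO_def arcs_garcs)
  moreover have "real (card (gAO (edge_ids G) (\<lambda>i. edges G ! i))) = gT (verts G) (edge_ids G) (\<lambda>i. edges G ! i)"
    using assms by (intro stanley(1)) (auto simp: wfg_def edge_ids_def)
  ultimately show ?thesis by (simp add: tutte20)
qed

lemma rk_le:
  assumes "wfg G" "A \<subseteq> edge_ids G"
  shows "card (verts G) - ncomp G A \<le> card A"
  using stanley(2)[of "edge_ids G" "verts G" "\<lambda>i. edges G ! i" A] assms
  by (auto simp: wfg_def edge_ids_def ncomp_gk)

lemma ncomp_le: "finite (verts G) \<Longrightarrow> ncomp G A \<le> card (verts G)"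
  by (simp add: ncomp_def card_image_le)

datatype pt = PA | PT | PL | PR | PS

lemma UNIV_pt: "(UNIV :: pt set) = {PA, PT, PL, PR, PS}"
  by (auto intro: pt.exhaust)

instance pt :: finite
  by standard (simp add: UNIV_pt)

fun ptl :: "pt \<Rightarrow> bool" where
  "ptl PA = True" | "ptl PT = False" | "ptl PL = False" | "ptl PR = True" | "ptl PS = False"
fun ptr :: "pt \<Rightarrow> bool" where
  "ptr PA = True" | "ptr PT = False" | "ptr PL = True" | "ptr PR = False" | "ptr PS = False"
fun plr :: "pt \<Rightarrow> bool" where
  "plr PA = True" | "plr PT = True" | "plr PL = False" | "plr PR = False" | "plr PS = False"

definition mkpt :: "bool \<Rightarrow> bool \<Rightarrow> bool \<Rightarrow> pt" where
  "mkpt a b c = (if a \<and> b then PA else if c then PT else if b then PL else if a then PR else PS)"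

definition ptype :: "sgraph \<Rightarrow> nat set \<Rightarrow> pt" where
  "ptype G A = mkpt ((topv G, leftv G) \<in> conn G A) ((topv G, rightv G) \<in> conn G A) ((leftv G, rightv G) \<in> conn G A)"

definition ST :: "sgraph \<Rightarrow> pt \<Rightarrow> real" where
  "ST G \<tau> = (\<Sum>A\<in>{A\<in>Pow (edge_ids G). ptype G A = \<tau>}. (-1::real) ^ nul G A)"

lemma sym_conn: "sym (conn G A)"
proof -
  have "sym (edge_rel G A)" by (auto simp: edge_rel_def sym_def)
  then show ?thesis unfolding conn_def by (rule sym_rtrancl)
qed

lemma conn_sym: "(a,b) \<in> conn G A \<Longrightarrow> (b,a) \<in> conn G A"
  using sym_conn[of G A] by (rule symD)

lemma conn_trans: "(a,b) \<in> conn G A \<Longrightarrow> (b,c) \<in> conn G A \<Longrightarrow> (a,c) \<in> conn G A"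
  unfolding conn_def by (rule rtrancl_trans)

lemma mkpt_bools: "ptl (mkpt a b c) = (a \<and> (b \<or> \<not> c))" "ptr (mkpt a b c) = (b \<and> (a \<or> \<not> c))"
  "plr (mkpt a b c) = ((a \<and> b) \<or> c)"
  by (simp_all add: mkpt_def)

lemma ptype_bools:
  "ptl (ptype G A) \<longleftrightarrow> (topv G, leftv G) \<in> conn G A"
  "ptr (ptype G A) \<longleftrightarrow> (topv G, rightv G) \<in> conn G A"
  "plr (ptype G A) \<longleftrightarrow> (leftv G, rightv G) \<in> conn G A"
proof -
  let ?a = "(topv G, leftv G) \<in> conn G A"
  let ?b = "(topv G, rightv G) \<in> conn G A"
  let ?c = "(leftv G, rightv G) \<in> conn G A"
  have h: "?a \<and> ?b \<longrightarrow> ?c" "?a \<and> ?c \<longrightarrow> ?b" "?b \<and> ?c \<longrightarrow> ?a"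
    using conn_sym[of _ _ G A] conn_trans[of _ _ G A] by blast+
  show "ptl (ptype G A) \<longleftrightarrow> ?a" "ptr (ptype G A) \<longleftrightarrow> ?b" "plr (ptype G A) \<longleftrightarrow> ?c"
    unfolding ptype_def mkpt_bools using h by blast+
qed

lemma ptype_eq_iff: "ptype G A = ptype G B \<longleftrightarrow>
   (ptl (ptype G A) = ptl (ptype G B) \<and> ptr (ptype G A) = ptr (ptype G B) \<and> plr (ptype G A) = plr (ptype G B))"
  by (cases "ptype G A"; cases "ptype G B") auto

lemma tutte2_ST: "tutte2 G 2 0 = ST G PA"
proof -
  have "{A\<in>Pow (edge_ids G). (topv G, leftv G) \<in> conn G A \<and> (topv G, rightv G) \<in> conn G A}
       = {A\<in>Pow (edge_ids G). ptype G A = PA}"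
    by (auto simp: ptype_def mkpt_def)
  then show ?thesis by (simp add: tutte2_def ST_def tweight20)
qed

lemma tutte1_ST: "tutte1 G 2 0 = ST G PT"
proof -
  have "{A\<in>Pow (edge_ids G). (leftv G, rightv G) \<in> conn G A \<and> (topv G, leftv G) \<notin> conn G A}
       = {A\<in>Pow (edge_ids G). ptype G A = PT}"
  proof -
    have "ptype G A = PT \<longleftrightarrow> (leftv G, rightv G) \<in> conn G A \<and> (topv G, leftv G) \<notin> conn G A" for A
    proof -
      have "ptype G A = PT \<longleftrightarrow> plr (ptype G A) \<and> \<not> ptl (ptype G A) \<and> \<not> ptr (ptype G A)"
        by (cases "ptype G A") auto
      moreover have "plr (ptype G A) \<and> \<not> ptl (ptype G A) \<longrightarrow> \<not> ptr (ptype G A)"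
        unfolding ptype_bools using conn_sym[of _ _ G A] conn_trans[of _ _ G A] by blast
      ultimately show ?thesis unfolding ptype_bools by blast
    qed
    then show ?thesis by auto
  qed
  then show ?thesis by (simp add: tutte1_def ST_def tweight20)
qed

lemma tutte0_ST: "tutte0 G 2 0 = ST G PS"
proof -
  have "ptype G A = PS \<longleftrightarrow> (topv G, leftv G) \<notin> conn G A \<and> (topv G, rightv G) \<notin> conn G A
       \<and> (leftv G, rightv G) \<notin> conn G A" for A
  proof -
    have "ptype G A = PS \<longleftrightarrow> \<not> plr (ptype G A) \<and> \<not> ptl (ptype G A) \<and> \<not> ptr (ptype G A)"
      by (cases "ptype G A") auto
    then show ?thesis unfolding ptype_bools by blast
  qed
  then show ?thesis by (simp add: tutte0_def ST_def tweight20)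
qed

lemma sum_by_type:
  assumes "finite P"
  shows "(\<Sum>B\<in>P. F (ty B) * (w B :: real)) = (\<Sum>\<tau>\<in>(UNIV::pt set). F \<tau> * (\<Sum>B\<in>{B\<in>P. ty B = \<tau>}. w B))"
proof -
  have "(\<Sum>B\<in>P. F (ty B) * w B) = (\<Sum>B\<in>P. \<Sum>\<tau>\<in>(UNIV::pt set). if ty B = \<tau> then F \<tau> * w B else 0)"
    by (simp add: sum.delta)
  also have "\<dots> = (\<Sum>\<tau>\<in>(UNIV::pt set). \<Sum>B\<in>P. if ty B = \<tau> then F \<tau> * w B else 0)"
    by (rule sum.swap)
  also have "\<dots> = (\<Sum>\<tau>\<in>(UNIV::pt set). F \<tau> * (\<Sum>B\<in>{B\<in>P. ty B = \<tau>}. w B))"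
    using assms by (simp add: sum.inter_filter[symmetric] sum_distrib_left)
  finally show ?thesis .
qed

lemma tutte_ST: "tutte G 2 0 = (\<Sum>\<tau>\<in>(UNIV::pt set). ST G \<tau>)"
proof -
  have "tutte G 2 0 = (\<Sum>A\<in>Pow (edge_ids G). (\<lambda>_. 1) (ptype G A) * (-1::real) ^ nul G A)"
    by (simp add: tutte_def tweight20)
  also have "\<dots> = (\<Sum>\<tau>\<in>(UNIV::pt set). ST G \<tau>)"
    by (subst sum_by_type) (auto simp: ST_def edge_ids_def)
  finally show ?thesis .
qed

lemma add_pair_card:
  assumes sR: "sym R" and fin: "finite X" and x: "x \<in> X" and y: "y \<in> X"
  shows "card ((\<lambda>w. (R \<union> {(x,y),(y,x)})\<^sup>* `` {w}) ` X) = card ((\<lambda>w. R\<^sup>* `` {w}) ` X) - (if (x,y) \<in> R\<^sup>* then 0 else 1)"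
proof (cases "(x,y) \<in> R\<^sup>*")
  case True
  have s: "sym (R\<^sup>*)" using sym_rtrancl[OF sR] .
  have "(y,x) \<in> R\<^sup>*" using True s by (rule symD[rotated])
  then have "R \<union> {(x,y),(y,x)} \<subseteq> R\<^sup>*" using True by auto
  then have "(R \<union> {(x,y),(y,x)})\<^sup>* \<subseteq> R\<^sup>*"
    by (metis rtrancl_idemp rtrancl_mono)
  moreover have "R\<^sup>* \<subseteq> (R \<union> {(x,y),(y,x)})\<^sup>*" by (rule rtrancl_mono) auto
  ultimately have "(R \<union> {(x,y),(y,x)})\<^sup>* = R\<^sup>*" by blast
  then show ?thesis using True by simp
next
  case False
  let ?h = "\<lambda>w. R\<^sup>* `` {w}"
  let ?R' = "R \<union> {(x,y),(y,x)}"
  have sR': "sym ?R'" using sR by (auto simp: sym_def)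
  let ?g = "\<lambda>w. if ?h w = ?h y then ?h x else ?h w"
  have hxy: "?h x \<noteq> ?h y" using False class_eq_iff[OF sR] by blast
  have ker: "\<forall>a\<in>X. \<forall>b\<in>X. (?R'\<^sup>* `` {a} = ?R'\<^sup>* `` {b}) \<longleftrightarrow> ?g a = ?g b"
  proof (intro ballI)
    fix a b assume "a \<in> X" "b \<in> X"
    have "(?R'\<^sup>* `` {a} = ?R'\<^sup>* `` {b}) \<longleftrightarrow> (a,b) \<in> ?R'\<^sup>*" by (rule class_eq_iff[OF sR'])
    also have "\<dots> \<longleftrightarrow> (a,b) \<in> R\<^sup>* \<or> ((a,x) \<in> R\<^sup>* \<and> (y,b) \<in> R\<^sup>*) \<or> ((a,y) \<in> R\<^sup>* \<and> (x,b) \<in> R\<^sup>*)"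
      using rtrancl_add_pair[OF sR, of x y] by auto
    also have "\<dots> \<longleftrightarrow> ?h a = ?h b \<or> (?h a = ?h x \<and> ?h y = ?h b) \<or> (?h a = ?h y \<and> ?h x = ?h b)"
      using class_eq_iff[OF sR] by blast
    also have "\<dots> \<longleftrightarrow> ?g a = ?g b" using hxy by auto
    finally show "(?R'\<^sup>* `` {a} = ?R'\<^sup>* `` {b}) \<longleftrightarrow> ?g a = ?g b" .
  qed
  have c1: "card ((\<lambda>w. ?R'\<^sup>* `` {w}) ` X) = card (?g ` X)" by (rule kernel_card[OF ker])
  have gX: "?g ` X = ?h ` X - {?h y}"
  proof
    show "?g ` X \<subseteq> ?h ` X - {?h y}" using x hxy by auto
    show "?h ` X - {?h y} \<subseteq> ?g ` X"
    proof
      fix C assume "C \<in> ?h ` X - {?h y}"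
      then obtain a where a: "a \<in> X" "C = ?h a" "?h a \<noteq> ?h y" by auto
      then have "?g a = C" by simp
      then show "C \<in> ?g ` X" using a by blast
    qed
  qed
  have "card (?g ` X) = card (?h ` X) - 1" unfolding gX using y fin by (simp add: card_Diff_singleton)
  then show ?thesis using c1 False by simp
qed

lemma image_rtrancl_sub: "map_prod g g ` (R\<^sup>*) \<subseteq> (map_prod g g ` R)\<^sup>*"
proof
  fix p assume "p \<in> map_prod g g ` (R\<^sup>*)"
  then obtain a b where ab: "(a,b) \<in> R\<^sup>*" "p = (g a, g b)" by auto
  from ab(1) have "(g a, g b) \<in> (map_prod g g ` R)\<^sup>*"
  proof (induction rule: rtrancl_induct)
    case base then show ?case by simp
  next
    case (step y z)
    then have "(g y, g z) \<in> map_prod g g ` R" by force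
    then show ?case using step.IH by (meson rtrancl.rtrancl_into_rtrancl)
  qed
  then show "p \<in> (map_prod g g ` R)\<^sup>*" using ab by simp
qed

lemma copyv_eq: "i < 3 \<Longrightarrow> j < 3 \<Longrightarrow> copyv i a = copyv j b \<longleftrightarrow> i = j \<and> a = b"
  unfolding copyv_def by presburger

lemma union_copies_rtrancl:
  "(\<Union>j\<in>{0,1,2::nat}. map_prod (copyv j) (copyv j) ` R j)\<^sup>* = Id \<union> (\<Union>j\<in>{0,1,2::nat}. map_prod (copyv j) (copyv j) ` (R j)\<^sup>*)"
  (is "?L\<^sup>* = ?RHS")
proof
  show "?L\<^sup>* \<subseteq> ?RHS"
  proof
    fix p assume "p \<in> ?L\<^sup>*"
    then obtain a b where p: "p = (a,b)" "(a,b) \<in> ?L\<^sup>*" by (cases p) auto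
    from p(2) have "(a,b) \<in> ?RHS"
    proof (induction rule: rtrancl_induct)
      case base then show ?case by simp
    next
      case (step y z)
      from step.hyps(2) obtain j a' b' where j: "j \<in> {0,1,2}" "(a',b') \<in> R j" "y = copyv j a'" "z = copyv j b'"
        by auto
      from step.IH show ?case
      proof
        assume "(a,y) \<in> Id"
        then have "a = copyv j a'" using j by simp
        moreover have "(a',b') \<in> (R j)\<^sup>*" using j by auto
        ultimately show ?thesis using j by blast
      next
        assume "(a,y) \<in> (\<Union>j\<in>{0,1,2::nat}. map_prod (copyv j) (copyv j) ` (R j)\<^sup>*)"
        then obtain i a'' c where i: "i \<in> {0,1,2}" "(a'',c) \<in> (R i)\<^sup>*" "a = copyv i a''" "y = copyv i c" by auto
        have "i = j \<and> c = a'" using copyv_eq[of i j c a'] i j by auto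
        then have "(a'',b') \<in> (R j)\<^sup>*" using i j by (meson rtrancl.rtrancl_into_rtrancl)
        then show ?thesis using i j \<open>i = j \<and> c = a'\<close> by blast
      qed
    qed
    then show "p \<in> ?RHS" using p by simp
  qed
next
  show "?RHS \<subseteq> ?L\<^sup>*"
  proof
    fix p assume "p \<in> ?RHS"
    then show "p \<in> ?L\<^sup>*"
    proof
      assume "p \<in> Id" then show ?thesis by auto
    next
      assume "p \<in> (\<Union>j\<in>{0,1,2::nat}. map_prod (copyv j) (copyv j) ` (R j)\<^sup>*)"
      then obtain j where j: "j \<in> {0,1,2}" "p \<in> map_prod (copyv j) (copyv j) ` (R j)\<^sup>*" by auto
      have "map_prod (copyv j) (copyv j) ` (R j)\<^sup>* \<subseteq> (map_prod (copyv j) (copyv j) ` R j)\<^sup>*"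
        by (rule image_rtrancl_sub)
      also have "\<dots> \<subseteq> ?L\<^sup>*" by (rule rtrancl_mono) (use j in auto)
      finally show ?thesis using j by blast
    qed
  qed
qed

lemma copies_char:
  assumes "i \<in> {0,1,2}" "j \<in> {0,1,2}"
  shows "(copyv i a, copyv j b) \<in> (\<Union>j\<in>{0,1,2::nat}. map_prod (copyv j) (copyv j) ` R j)\<^sup>*
    \<longleftrightarrow> i = j \<and> (a,b) \<in> (R i)\<^sup>*"
proof -
  have ij: "i < 3" "j < 3" using assms by auto
  have "(copyv i a, copyv j b) \<in> Id \<union> (\<Union>j\<in>{0,1,2::nat}. map_prod (copyv j) (copyv j) ` (R j)\<^sup>*)
     \<longleftrightarrow> i = j \<and> (a,b) \<in> (R i)\<^sup>*"
  proof
    assume "(copyv i a, copyv j b) \<in> Id \<union> (\<Union>j\<in>{0,1,2::nat}. map_prod (copyv j) (copyv j) ` (R j)\<^sup>*)"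
    then show "i = j \<and> (a,b) \<in> (R i)\<^sup>*"
    proof
      assume "(copyv i a, copyv j b) \<in> Id"
      then show ?thesis using copyv_eq[OF ij] by auto
    next
      assume "(copyv i a, copyv j b) \<in> (\<Union>j\<in>{0,1,2::nat}. map_prod (copyv j) (copyv j) ` (R j)\<^sup>*)"
      then obtain k a' b' where k: "k \<in> {0,1,2}" "(a',b') \<in> (R k)\<^sup>*" "copyv i a = copyv k a'" "copyv j b = copyv k b'"
        by auto
      have "k < 3" using k by auto
      then show ?thesis using k copyv_eq[of i k a a'] copyv_eq[of j k b b'] ij by auto
    qed
  next
    assume "i = j \<and> (a,b) \<in> (R i)\<^sup>*"
    then show "(copyv i a, copyv j b) \<in> Id \<union> (\<Union>j\<in>{0,1,2::nat}. map_prod (copyv j) (copyv j) ` (R j)\<^sup>*)"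
      using assms by blast
  qed
  then show ?thesis using union_copies_rtrancl[of R] by simp
qed

definition pc :: "nat \<Rightarrow> nat \<Rightarrow> nat set \<Rightarrow> nat set" where
  "pc m j A = {k. k < m \<and> j * m + k \<in> A}"

definition endsD :: "sgraph \<Rightarrow> nat \<Rightarrow> nat \<times> nat" where
  "endsD G i = map_prod (copyv (i div length (edges G))) (copyv (i div length (edges G)))
                 (edges G ! (i mod length (edges G)))"

lemma ident3:
  assumes "s1 \<noteq> s2" "s1 \<noteq> s3" "s2 \<noteq> s3" "t1 \<noteq> t2" "t1 \<noteq> t3" "t2 \<noteq> t3"
    "t1 \<noteq> s1" "t1 \<noteq> s2" "t1 \<noteq> s3" "t2 \<noteq> s1" "t2 \<noteq> s2" "t2 \<noteq> s3" "t3 \<noteq> s1" "t3 \<noteq> s2" "t3 \<noteq> s3"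
  shows "((if x = s1 then t1 else if x = s2 then t2 else if x = s3 then t3 else x) =
          (if y = s1 then t1 else if y = s2 then t2 else if y = s3 then t3 else y)) \<longleftrightarrow>
         x = y \<or> (x = s1 \<and> y = t1) \<or> (x = t1 \<and> y = s1) \<or> (x = s2 \<and> y = t2) \<or> (x = t2 \<and> y = s2)
          \<or> (x = s3 \<and> y = t3) \<or> (x = t3 \<and> y = s3)"
  using assms by auto

context
  fixes G :: sgraph
  assumes wf: "wfg G"
begin

lemma wfG: "finite (verts G)" "\<And>i. i < length (edges G) \<Longrightarrow> fst (edges G ! i) \<in> verts G"
  "\<And>i. i < length (edges G) \<Longrightarrow> snd (edges G ! i) \<in> verts G"
  "topv G \<in> verts G" "leftv G \<in> verts G" "rightv G \<in> verts G"
  "topv G \<noteq> leftv G" "topv G \<noteq> rightv G" "leftv G \<noteq> rightv G" "0 < length (edges G)"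
  using wf by (auto simp: wfg_def)

lemma cdist:
  "copyv 0 (leftv G) \<noteq> copyv 0 (rightv G)" "copyv 0 (leftv G) \<noteq> copyv 1 (rightv G)"
  "copyv 0 (rightv G) \<noteq> copyv 1 (rightv G)"
  "copyv 1 (topv G) \<noteq> copyv 2 (topv G)" "copyv 1 (topv G) \<noteq> copyv 2 (leftv G)"
  "copyv 2 (topv G) \<noteq> copyv 2 (leftv G)"
  "copyv 1 (topv G) \<noteq> copyv 0 (leftv G)" "copyv 1 (topv G) \<noteq> copyv 0 (rightv G)"
  "copyv 1 (topv G) \<noteq> copyv 1 (rightv G)"
  "copyv 2 (topv G) \<noteq> copyv 0 (leftv G)" "copyv 2 (topv G) \<noteq> copyv 0 (rightv G)"
  "copyv 2 (topv G) \<noteq> copyv 1 (rightv G)"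
  "copyv 2 (leftv G) \<noteq> copyv 0 (leftv G)" "copyv 2 (leftv G) \<noteq> copyv 0 (rightv G)"
  "copyv 2 (leftv G) \<noteq> copyv 1 (rightv G)"
  using wfG(7-9) by (simp_all add: copyv_eq)

lemma ident_kernel:
  "identify G x = identify G y \<longleftrightarrow> x = y
     \<or> (x = copyv 0 (leftv G) \<and> y = copyv 1 (topv G)) \<or> (x = copyv 1 (topv G) \<and> y = copyv 0 (leftv G))
     \<or> (x = copyv 0 (rightv G) \<and> y = copyv 2 (topv G)) \<or> (x = copyv 2 (topv G) \<and> y = copyv 0 (rightv G))
     \<or> (x = copyv 1 (rightv G) \<and> y = copyv 2 (leftv G)) \<or> (x = copyv 2 (leftv G) \<and> y = copyv 1 (rightv G))"
  unfolding identify_def by (rule ident3) (use cdist in simp_all)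

lemma ident_c0: "identify G (copyv 0 v) = (if v = leftv G then copyv 1 (topv G) else if v = rightv G then copyv 2 (topv G) else copyv 0 v)"
  unfolding identify_def by (auto simp: copyv_eq)

lemma ident_c1: "identify G (copyv 1 v) = (if v = rightv G then copyv 2 (leftv G) else copyv 1 v)"
  unfolding identify_def by (auto simp: copyv_eq)

lemma ident_c2: "identify G (copyv 2 v) = copyv 2 v"
  unfolding identify_def by (auto simp: copyv_eq)

lemma H_verts: "verts (sier_step G) = identify G ` (copyv 0 ` verts G \<union> copyv 1 ` verts G \<union> copyv 2 ` verts G)"
  by (simp add: sier_step_def Un_assoc)

lemma H_terms: "topv (sier_step G) = identify G (copyv 0 (topv G))"
  "leftv (sier_step G) = identify G (copyv 1 (leftv G))"
  "rightv (sier_step G) = identify G (copyv 2 (rightv G))"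
  by (simp_all add: sier_step_def)

definition Lj :: "nat \<Rightarrow> (nat \<times> nat) list" where
  "Lj j = map (\<lambda>(u,v). (identify G (copyv j u), identify G (copyv j v))) (edges G)"

lemma H_edges: "edges (sier_step G) = Lj 0 @ Lj 1 @ Lj 2"
  by (simp add: sier_step_def Lj_def)

lemma H_len: "length (edges (sier_step G)) = 3 * length (edges G)"
  by (simp add: H_edges Lj_def)

lemma Lj_nth: "k < length (edges G) \<Longrightarrow> Lj j ! k = map_prod (identify G \<circ> copyv j) (identify G \<circ> copyv j) (edges G ! k)"
  by (cases "edges G ! k") (simp add: Lj_def)

lemma H_nth_jk:
  assumes "j < 3" "k < length (edges G)"
  shows "edges (sier_step G) ! (j * length (edges G) + k) =
         map_prod (identify G \<circ> copyv j) (identify G \<circ> copyv j) (edges G ! k)"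
proof -
  let ?m = "length (edges G)"
  have len: "length (Lj i) = ?m" for i by (simp add: Lj_def)
  have "j = 0 \<or> j = 1 \<or> j = 2" using assms by auto
  then show ?thesis
  proof (elim disjE)
    assume "j = 0" then show ?thesis using assms by (simp add: H_edges nth_append len Lj_nth)
  next
    assume "j = 1" then show ?thesis using assms by (simp add: H_edges nth_append len Lj_nth)
  next
    assume "j = 2" then show ?thesis using assms by (simp add: H_edges nth_append len Lj_nth)
  qed
qed

lemma H_nth:
  assumes "i < 3 * length (edges G)"
  shows "edges (sier_step G) ! i = map_prod (identify G) (identify G) (endsD G i)"
proof -
  let ?m = "length (edges G)"
  have m0: "0 < ?m" by (rule wfG(10))
  have j: "i div ?m < 3" using assms m0 by (simp add: less_mult_imp_div_less mult.commute)
  have k: "i mod ?m < ?m" using m0 by simp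
  have i: "i = (i div ?m) * ?m + i mod ?m" by simp
  have "edges (sier_step G) ! i = edges (sier_step G) ! ((i div ?m) * ?m + i mod ?m)" using i by simp
  also have "\<dots> = map_prod (identify G \<circ> copyv (i div ?m)) (identify G \<circ> copyv (i div ?m)) (edges G ! (i mod ?m))"
    by (rule H_nth_jk[OF j k])
  finally show ?thesis by (cases "edges G ! (i mod ?m)") (simp add: endsD_def)
qed

lemma gerel_cong: "(\<And>i. i \<in> A \<Longrightarrow> e1 i = e2 i) \<Longrightarrow> gerel e1 A = gerel e2 A"
  by (auto simp: gerel_def)

lemma edge_rel_H:
  assumes "A \<subseteq> edge_ids (sier_step G)"
  shows "edge_rel (sier_step G) A = map_prod (identify G) (identify G) ` gerel (endsD G) A"
proof -
  have "edge_rel (sier_step G) A = gerel (\<lambda>i. edges (sier_step G) ! i) A"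
    by (rule edge_rel_gerel[OF assms])
  also have "\<dots> = gerel (\<lambda>i. map_prod (identify G) (identify G) (endsD G i)) A"
    using assms by (intro gerel_cong) (auto simp: edge_ids_def H_len H_nth)
  also have "\<dots> = map_prod (identify G) (identify G) ` gerel (endsD G) A"
    by (rule gerel_comp)
  finally show ?thesis .
qed

lemma gerel_endsD:
  assumes A: "A \<subseteq> {..<3 * length (edges G)}"
  shows "gerel (endsD G) A = (\<Union>j\<in>{0,1,2::nat}. map_prod (copyv j) (copyv j) ` gerel (\<lambda>i. edges G ! i) (pc (length (edges G)) j A))"
proof -
  let ?m = "length (edges G)"
  have m0: "0 < ?m" by (rule wfG(10))
  show ?thesis
  proof
    show "gerel (endsD G) A \<subseteq> (\<Union>j\<in>{0,1,2::nat}. map_prod (copyv j) (copyv j) ` gerel (\<lambda>i. edges G ! i) (pc ?m j A))"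
    proof
      fix p assume "p \<in> gerel (endsD G) A"
      then obtain i where i: "i \<in> A" "endsD G i = p \<or> endsD G i = prod.swap p"
        by (auto simp: gerel_def)
      let ?j = "i div ?m" and ?k = "i mod ?m"
      have "i < 3 * ?m" using A i by auto
      then have "?j < 3" using m0 by (simp add: less_mult_imp_div_less mult.commute)
      then have j3: "?j \<in> {0,1,2}" by auto
      have kpc: "?k \<in> pc ?m ?j A" using i m0 by (simp add: pc_def)
      obtain c d where cd: "edges G ! ?k = (c,d)" by (cases "edges G ! ?k")
      have "p = (copyv ?j c, copyv ?j d) \<or> p = (copyv ?j d, copyv ?j c)"
        using i cd by (cases p) (auto simp: endsD_def)
      moreover have "(c,d) \<in> gerel (\<lambda>i. edges G ! i) (pc ?m ?j A)" "(d,c) \<in> gerel (\<lambda>i. edges G ! i) (pc ?m ?j A)"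
        using kpc cd by (auto simp: gerel_def)
      ultimately show "p \<in> (\<Union>j\<in>{0,1,2::nat}. map_prod (copyv j) (copyv j) ` gerel (\<lambda>i. edges G ! i) (pc ?m j A))"
        using j3 by (elim disjE) force+
    qed
  next
    show "(\<Union>j\<in>{0,1,2::nat}. map_prod (copyv j) (copyv j) ` gerel (\<lambda>i. edges G ! i) (pc ?m j A)) \<subseteq> gerel (endsD G) A"
    proof
      fix p assume "p \<in> (\<Union>j\<in>{0,1,2::nat}. map_prod (copyv j) (copyv j) ` gerel (\<lambda>i. edges G ! i) (pc ?m j A))"
      then obtain j c d k where j: "j \<in> {0,1,2}" "p = (copyv j c, copyv j d)" "k \<in> pc ?m j A"
        "edges G ! k = (c,d) \<or> edges G ! k = (d,c)"
        by (auto simp: gerel_def)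
      let ?i = "j * ?m + k"
      have k: "k < ?m" "?i \<in> A" using j by (auto simp: pc_def)
      have "?i div ?m = j" "?i mod ?m = k" using k m0 by auto
      then have "endsD G ?i = p \<or> endsD G ?i = prod.swap p" using j by (auto simp: endsD_def)
      then show "p \<in> gerel (endsD G) A" using k by (cases p) (auto simp: gerel_def)
    qed
  qed
qed

end

definition ctype :: "pt \<Rightarrow> pt \<Rightarrow> pt \<Rightarrow> pt" where
  "ctype a b c = (case a of PA \<Rightarrow> (case b of PA \<Rightarrow> (case c of PA \<Rightarrow> PA | PT \<Rightarrow> PA | PL \<Rightarrow> PA | PR \<Rightarrow> PR | PS \<Rightarrow> PR) | PT \<Rightarrow> (case c of PA \<Rightarrow> PA | PT \<Rightarrow> PT | PL \<Rightarrow> PL | PR \<Rightarrow> PR | PS \<Rightarrow> PS) | PL \<Rightarrow> (case c of PA \<Rightarrow> PL | PT \<Rightarrow> PL | PL \<Rightarrow> PL | PR \<Rightarrow> PS | PS \<Rightarrow> PS) | PR \<Rightarrow> (case c of PA \<Rightarrow> PA | PT \<Rightarrow> PR | PL \<Rightarrow> PA | PR \<Rightarrow> PR | PS \<Rightarrow> PR) | PS \<Rightarrow> (case c of PA \<Rightarrow> PL | PT \<Rightarrow> PS | PL \<Rightarrow> PL | PR \<Rightarrow> PS | PS \<Rightarrow> PS)) | PT \<Rightarrow> (case b of PA \<Rightarrow> (case c of PA \<Rightarrow> PT | PT \<Rightarrow> PT | PL \<Rightarrow> PT | PR \<Rightarrow> PS | PS \<Rightarrow> PS) | PT \<Rightarrow>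 (case c of PA \<Rightarrow> PT | PT \<Rightarrow> PT | PL \<Rightarrow> PS | PR \<Rightarrow> PS | PS \<Rightarrow> PS) | PL \<Rightarrow> (case c of PA \<Rightarrow> PS | PT \<Rightarrow> PS | PL \<Rightarrow> PS | PR \<Rightarrow> PS | PS \<Rightarrow> PS) | PR \<Rightarrow> (case c of PA \<Rightarrow> PT | PT \<Rightarrow> PS | PL \<Rightarrow> PT | PR \<Rightarrow> PS | PS \<Rightarrow> PS) | PS \<Rightarrow> (case c of PA \<Rightarrow> PS | PT \<Rightarrow> PS | PL \<Rightarrow> PS | PR \<Rightarrow> PS | PS \<Rightarrow> PS)) | PL \<Rightarrow> (case b of PA \<Rightarrow> (case c of PA \<Rightarrow> PA | PT \<Rightarrow> PT | PL \<Rightarrow> PL | PR \<Rightarrow> PR | PS \<Rightarrow> PS) | PT \<Rightarrow> (case c of PA \<Rightarrow> PA | PT \<Rightarrow> PT | PL \<Rightarrow> PL | PR \<Rightarrow> PR | PS \<Rightarrow> PS) | PL \<Rightarrow> (case c of PA \<Rightarrow> PL | PT \<Rightarrow> PS | PL \<Rightarrow> PL | PR \<Rightarrow> PS | PS \<Rightarrow> PS) | PR \<Rightarrow> (case c of PA \<Rightarrow> PL | PT \<Rightarrow> PS | PL \<Rightarrow> PL | PR \<Rightarrow> PS | PS \<Rightarrow> PS) | PS \<Rightarrow> (case c of PA \<Rightarrow> PL | PT \<Rightarrow> PS | PL \<Rightarrow> PL | PR \<Rightarrow> PS | PS \<Rightarrow> PS)) | PR \<Rightarrow> (case b of PA \<Rightarrow>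 (case c of PA \<Rightarrow> PA | PT \<Rightarrow> PA | PL \<Rightarrow> PR | PR \<Rightarrow> PR | PS \<Rightarrow> PR) | PT \<Rightarrow> (case c of PA \<Rightarrow> PT | PT \<Rightarrow> PT | PL \<Rightarrow> PS | PR \<Rightarrow> PS | PS \<Rightarrow> PS) | PL \<Rightarrow> (case c of PA \<Rightarrow> PL | PT \<Rightarrow> PL | PL \<Rightarrow> PS | PR \<Rightarrow> PS | PS \<Rightarrow> PS) | PR \<Rightarrow> (case c of PA \<Rightarrow> PR | PT \<Rightarrow> PR | PL \<Rightarrow> PR | PR \<Rightarrow> PR | PS \<Rightarrow> PR) | PS \<Rightarrow> (case c of PA \<Rightarrow> PS | PT \<Rightarrow> PS | PL \<Rightarrow> PS | PR \<Rightarrow> PS | PS \<Rightarrow> PS)) | PS \<Rightarrow> (case b of PA \<Rightarrow> (case c of PA \<Rightarrow> PT | PT \<Rightarrow> PT | PL \<Rightarrow> PS | PR \<Rightarrow> PS | PS \<Rightarrow> PS) | PT \<Rightarrow> (case c of PA \<Rightarrow> PT | PT \<Rightarrow> PT | PL \<Rightarrow> PS | PR \<Rightarrow> PS | PS \<Rightarrow> PS) | PL \<Rightarrow> (case c of PA \<Rightarrow> PS | PT \<Rightarrow> PS | PL \<Rightarrow> PS | PR \<Rightarrow> PS | PS \<Rightarrow> PS) | PR \<Rightarrow> (case c of PA \<Rightarrow> PS | PT \<Rightarrow> PS | PL \<Rightarrow> PS | PR \<Rightarrow> PS | PS \<Rightarrow> PS) | PS \<Rightarrow> (case c of PA \<Rightarrow>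 PS | PT \<Rightarrow> PS | PL \<Rightarrow> PS | PR \<Rightarrow> PS | PS \<Rightarrow> PS)))"

context
  fixes G :: sgraph
  assumes wf: "wfg G"
begin

abbreviation "mm \<equiv> length (edges G)"
abbreviation "tt \<equiv> topv G"
abbreviation "ll \<equiv> leftv G"
abbreviation "rr \<equiv> rightv G"

definition P1 :: "(nat \<times> nat) set" where "P1 = {(copyv 0 ll, copyv 1 tt), (copyv 1 tt, copyv 0 ll)}"
definition P2 :: "(nat \<times> nat) set" where "P2 = {(copyv 0 rr, copyv 2 tt), (copyv 2 tt, copyv 0 rr)}"
definition P3 :: "(nat \<times> nat) set" where "P3 = {(copyv 1 rr, copyv 2 ll), (copyv 2 ll, copyv 1 rr)}"

definition Q0 :: "nat set \<Rightarrow> (nat \<times> nat) set" where "Q0 A = (gerel (endsD G) A)\<^sup>*"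
definition Q1 :: "nat set \<Rightarrow> (nat \<times> nat) set" where "Q1 A = (gerel (endsD G) A \<union> P1)\<^sup>*"
definition Q2 :: "nat set \<Rightarrow> (nat \<times> nat) set" where "Q2 A = (gerel (endsD G) A \<union> P1 \<union> P2)\<^sup>*"
definition Q3 :: "nat set \<Rightarrow> (nat \<times> nat) set" where "Q3 A = (gerel (endsD G) A \<union> P1 \<union> P2 \<union> P3)\<^sup>*"

lemma symP: "sym P1" "sym P2" "sym P3" by (auto simp: P1_def P2_def P3_def sym_def)

lemma sym_R: "sym (gerel (endsD G) A)" "sym (gerel (endsD G) A \<union> P1)" "sym (gerel (endsD G) A \<union> P1 \<union> P2)"
  "sym (gerel (endsD G) A \<union> P1 \<union> P2 \<union> P3)"
  using sym_gerel[of "endsD G" A] symP by (auto intro: sym_Un)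

lemma Q1_iff: "(a,b) \<in> Q1 A \<longleftrightarrow> (a,b) \<in> Q0 A \<or> ((a, copyv 0 ll) \<in> Q0 A \<and> (copyv 1 tt, b) \<in> Q0 A)
    \<or> ((a, copyv 1 tt) \<in> Q0 A \<and> (copyv 0 ll, b) \<in> Q0 A)"
proof -
  have "Q1 A = (gerel (endsD G) A \<union> {(copyv 0 ll, copyv 1 tt), (copyv 1 tt, copyv 0 ll)})\<^sup>*"
    by (simp add: Q1_def P1_def)
  then show ?thesis using rtrancl_add_pair[of "gerel (endsD G) A" "copyv 0 ll" "copyv 1 tt", OF sym_R(1)] by (auto simp: Q0_def)
qed

lemma Q2_iff: "(a,b) \<in> Q2 A \<longleftrightarrow> (a,b) \<in> Q1 A \<or> ((a, copyv 0 rr) \<in> Q1 A \<and> (copyv 2 tt, b) \<in> Q1 A)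
    \<or> ((a, copyv 2 tt) \<in> Q1 A \<and> (copyv 0 rr, b) \<in> Q1 A)"
proof -
  have "Q2 A = ((gerel (endsD G) A \<union> P1) \<union> {(copyv 0 rr, copyv 2 tt), (copyv 2 tt, copyv 0 rr)})\<^sup>*"
    by (simp add: Q2_def P2_def)
  then show ?thesis using rtrancl_add_pair[of "gerel (endsD G) A \<union> P1" "copyv 0 rr" "copyv 2 tt", OF sym_R(2)] by (auto simp: Q1_def)
qed

lemma Q3_iff: "(a,b) \<in> Q3 A \<longleftrightarrow> (a,b) \<in> Q2 A \<or> ((a, copyv 1 rr) \<in> Q2 A \<and> (copyv 2 ll, b) \<in> Q2 A)
    \<or> ((a, copyv 2 ll) \<in> Q2 A \<and> (copyv 1 rr, b) \<in> Q2 A)"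
proof -
  have "Q3 A = ((gerel (endsD G) A \<union> P1 \<union> P2) \<union> {(copyv 1 rr, copyv 2 ll), (copyv 2 ll, copyv 1 rr)})\<^sup>*"
    by (simp add: Q3_def P3_def)
  then show ?thesis using rtrancl_add_pair[of "gerel (endsD G) A \<union> P1 \<union> P2" "copyv 1 rr" "copyv 2 ll", OF sym_R(3)] by (auto simp: Q2_def)
qed

lemma pc_sub: "pc mm j A \<subseteq> edge_ids G"
  by (auto simp: pc_def edge_ids_def)

lemma Q0_iff:
  assumes A: "A \<subseteq> {..<3 * mm}" and ij: "i \<in> {0,1,2}" "j \<in> {0,1,2}"
  shows "(copyv i a, copyv j b) \<in> Q0 A \<longleftrightarrow> i = j \<and> (a,b) \<in> conn G (pc mm i A)"
  unfolding Q0_def gerel_endsD[OF wf A] using copies_char[OF ij] conn_gerel[OF pc_sub] by simp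

lemma tbools:
  "(tt, ll) \<in> conn G B \<longleftrightarrow> ptl (ptype G B)" "(ll, tt) \<in> conn G B \<longleftrightarrow> ptl (ptype G B)"
  "(tt, rr) \<in> conn G B \<longleftrightarrow> ptr (ptype G B)" "(rr, tt) \<in> conn G B \<longleftrightarrow> ptr (ptype G B)"
  "(ll, rr) \<in> conn G B \<longleftrightarrow> plr (ptype G B)" "(rr, ll) \<in> conn G B \<longleftrightarrow> plr (ptype G B)"
  "(x, x) \<in> conn G B"
  using ptype_bools[of G B] conn_sym[of _ _ G B] by (auto simp: conn_def)

lemma conn_H_iff:
  assumes A: "A \<subseteq> edge_ids (sier_step G)"
  shows "(identify G x, identify G y) \<in> conn (sier_step G) A \<longleftrightarrow> (x,y) \<in> Q3 A"
proof -
  let ?f = "identify G"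
  have "(?f x, ?f y) \<in> conn (sier_step G) A \<longleftrightarrow> (?f x, ?f y) \<in> (map_prod ?f ?f ` gerel (endsD G) A)\<^sup>*"
    by (simp add: conn_def edge_rel_H[OF wf A])
  also have "\<dots> \<longleftrightarrow> (x,y) \<in> (gerel (endsD G) A \<union> {(a,b). ?f a = ?f b})\<^sup>*"
    by (rule merge_rtrancl)
  also have "gerel (endsD G) A \<union> {(a,b). ?f a = ?f b} = (gerel (endsD G) A \<union> P1 \<union> P2 \<union> P3)\<^sup>="
    using ident_kernel[OF wf] by (auto simp: P1_def P2_def P3_def)
  finally show ?thesis by (simp add: Q3_def)
qed

end

context
  fixes G :: sgraph
  assumes wf: "wfg G"
begin


lemma A_H: "A \<subseteq> {..<3 * length (edges G)} \<Longrightarrow> A \<subseteq> edge_ids (sier_step G)"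
  by (simp add: edge_ids_def H_len[OF wf])

lemma ptype_H:
  assumes A: "A \<subseteq> {..<3 * length (edges G)}"
  shows "ptype (sier_step G) A = ctype (ptype G (pc (length (edges G)) 0 A)) (ptype G (pc (length (edges G)) 1 A)) (ptype G (pc (length (edges G)) 2 A))"
proof -
  have AH: "A \<subseteq> edge_ids (sier_step G)" using A_H[OF A] .
  have "ptype (sier_step G) A = mkpt ((copyv 0 (topv G), copyv 1 (leftv G)) \<in> Q3 G A)
      ((copyv 0 (topv G), copyv 2 (rightv G)) \<in> Q3 G A) ((copyv 1 (leftv G), copyv 2 (rightv G)) \<in> Q3 G A)"
    unfolding ptype_def H_terms[OF wf] conn_H_iff[OF wf AH] ..
  also have "\<dots> = ctype (ptype G (pc (length (edges G)) 0 A)) (ptype G (pc (length (edges G)) 1 A)) (ptype G (pc (length (edges G)) 2 A))"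
    unfolding Q3_iff[OF wf] Q2_iff[OF wf] Q1_iff[OF wf]
    apply (simp only: Q0_iff[OF wf A] tbools[OF wf] simp_thms insert_iff singleton_iff zero_neq_one one_neq_zero
       numeral_One[symmetric] zero_neq_numeral numeral_neq_zero numeral_eq_iff semiring_norm)
    by (cases "ptype G (pc (length (edges G)) 0 A)"; cases "ptype G (pc (length (edges G)) 1 A)";
        cases "ptype G (pc (length (edges G)) 2 A)"; simp add: mkpt_def ctype_def)
  finally show ?thesis .
qed


lemma glue_facts:
  assumes A: "A \<subseteq> {..<3 * length (edges G)}"
  shows "(copyv 0 (leftv G), copyv 1 (topv G)) \<notin> Q0 G A"
    "(copyv 0 (rightv G), copyv 2 (topv G)) \<notin> Q1 G A"
    "(copyv 1 (rightv G), copyv 2 (leftv G)) \<in> Q2 G A \<longleftrightarrow>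
       plr (ptype G (pc (length (edges G)) 0 A)) \<and> ptr (ptype G (pc (length (edges G)) 1 A)) \<and> ptl (ptype G (pc (length (edges G)) 2 A))"
proof -
  show "(copyv 0 (leftv G), copyv 1 (topv G)) \<notin> Q0 G A"
    by (simp add: Q0_iff[OF wf A])
  show "(copyv 0 (rightv G), copyv 2 (topv G)) \<notin> Q1 G A"
    unfolding Q1_iff[OF wf] by (simp add: Q0_iff[OF wf A])
  show "(copyv 1 (rightv G), copyv 2 (leftv G)) \<in> Q2 G A \<longleftrightarrow>
       plr (ptype G (pc (length (edges G)) 0 A)) \<and> ptr (ptype G (pc (length (edges G)) 1 A)) \<and> ptl (ptype G (pc (length (edges G)) 2 A))"
    unfolding Q2_iff[OF wf] Q1_iff[OF wf]
    apply (simp only: Q0_iff[OF wf A] tbools[OF wf] simp_thms insert_iff singleton_iff zero_neq_one one_neq_zero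
       numeral_One[symmetric] zero_neq_numeral numeral_neq_zero numeral_eq_iff semiring_norm)
    by (cases "ptype G (pc (length (edges G)) 0 A)"; cases "ptype G (pc (length (edges G)) 1 A)";
        cases "ptype G (pc (length (edges G)) 2 A)"; simp)
qed

lemma ident_c1': "identify G (copyv (Suc 0) v) = (if v = rightv G then copyv 2 (leftv G) else copyv (Suc 0) v)"
  using ident_c1[OF wf, of v] by simp

definition VD :: "nat set" where
  "VD = copyv 0 ` verts G \<union> copyv 1 ` verts G \<union> copyv 2 ` verts G"

lemma finVD: "finite VD" using wfG(1)[OF wf] by (simp add: VD_def)

lemma inj_copy: "inj_on (copyv j) X" by (auto simp: inj_on_def copyv_def)

lemma card_VD: "card VD = 3 * card (verts G)"
proof -
  have f: "finite (verts G)" by (rule wfG(1)[OF wf])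
  have d1: "copyv 0 ` verts G \<inter> copyv 1 ` verts G = {}" by (auto simp: copyv_eq)
  have d2: "(copyv 0 ` verts G \<union> copyv 1 ` verts G) \<inter> copyv 2 ` verts G = {}" by (auto simp: copyv_eq)
  have c: "card (copyv j ` verts G) = card (verts G)" for j by (rule card_image[OF inj_copy])
  show ?thesis unfolding VD_def using card_Un_disjoint[OF _ _ d2] card_Un_disjoint[OF _ _ d1] f c by simp
qed

lemma verts_H_VD: "verts (sier_step G) = identify G ` VD"
  unfolding VD_def by (rule H_verts[OF wf])

lemma card_verts_H: "card (verts (sier_step G)) = 3 * card (verts G) - 3"
proof -
  let ?f = "identify G"
  let ?S = "{copyv 0 (leftv G), copyv 0 (rightv G), copyv 1 (rightv G)}"
  have tv: "topv G \<noteq> leftv G" "topv G \<noteq> rightv G" "leftv G \<noteq> rightv G" using wfG[OF wf] by auto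
  have tV: "topv G \<in> verts G" "leftv G \<in> verts G" "rightv G \<in> verts G" using wfG[OF wf] by auto
  have mVD: "copyv j v \<in> VD" if "j \<in> {0,1,2}" "v \<in> verts G" for j v using that by (auto simp: VD_def)
  have img: "?f x \<in> VD - ?S \<and> (x \<notin> ?S \<longrightarrow> ?f x = x)" if x: "x \<in> VD" for x
  proof -
    from x obtain j v where jv: "j \<in> {0,1,2::nat}" "v \<in> verts G" "x = copyv j v" by (auto simp: VD_def)
    have "j = 0 \<or> j = 1 \<or> j = 2" using jv(1) by auto
    then show ?thesis
    proof (elim disjE)
      assume j: "j = 0"
      show ?thesis
      proof (cases "v = leftv G")
        case True
        have "?f x = copyv 1 (topv G)" using j jv True by (simp add: ident_c0[OF wf])
        moreover have "copyv 1 (topv G) \<in> VD" using tV by (intro mVD) auto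
        moreover have "copyv 1 (topv G) \<notin> ?S" using tv by (simp add: copyv_eq)
        moreover have "x \<in> ?S" using j jv True by simp
        ultimately show ?thesis by simp
      next
        case False
        show ?thesis
        proof (cases "v = rightv G")
          case True
          have "?f x = copyv 2 (topv G)" using j jv True tv by (simp add: ident_c0[OF wf])
          moreover have "copyv 2 (topv G) \<in> VD" using tV by (intro mVD) auto
          moreover have "copyv 2 (topv G) \<notin> ?S" using tv by (simp add: copyv_eq)
          moreover have "x \<in> ?S" using j jv True by simp
          ultimately show ?thesis by simp
        next
          case False2: False
          have "?f x = x" using j jv False False2 by (simp add: ident_c0[OF wf])
          moreover have "x \<in> VD" by (rule x)
          moreover have "x \<notin> ?S" using j jv False False2 by (simp add: copyv_eq)
          ultimately show ?thesis by simp
        qed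
      qed
    next
      assume j: "j = 1"
      show ?thesis
      proof (cases "v = rightv G")
        case True
        have "?f x = copyv 2 (leftv G)" using j jv True by (simp add: ident_c1[OF wf] ident_c1')
        moreover have "copyv 2 (leftv G) \<in> VD" using tV by (intro mVD) auto
        moreover have "copyv 2 (leftv G) \<notin> ?S" using tv by (simp add: copyv_eq)
        moreover have "x \<in> ?S" using j jv True by simp
        ultimately show ?thesis by simp
      next
        case False
        have "?f x = x" using j jv False by (simp add: ident_c1[OF wf] ident_c1')
        moreover have "x \<in> VD" by (rule x)
        moreover have "x \<notin> ?S" using j jv False by (simp add: copyv_eq)
        ultimately show ?thesis by simp
      qed
    next
      assume j: "j = 2"
      have "?f x = x" using j jv by (simp add: ident_c2[OF wf])
      moreover have "x \<notin> ?S" using j jv by (simp add: copyv_eq)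
      ultimately show ?thesis using x by simp
    qed
  qed
  have eq: "?f ` VD = VD - ?S"
  proof
    show "?f ` VD \<subseteq> VD - ?S"
    proof
      fix y assume "y \<in> ?f ` VD"
      then obtain x where "x \<in> VD" "y = ?f x" by blast
      then show "y \<in> VD - ?S" using img[of x] by simp
    qed
  next
    show "VD - ?S \<subseteq> ?f ` VD"
    proof
      fix y assume y: "y \<in> VD - ?S"
      then have "y \<in> VD" "y \<notin> ?S" by simp_all
      then have "?f y = y" using img[of y] by simp
      then show "y \<in> ?f ` VD" using \<open>y \<in> VD\<close> by (metis imageI)
    qed
  qed
  have s1: "copyv 0 (leftv G) \<in> VD" by (rule mVD) (use tV in auto)
  have s2: "copyv 0 (rightv G) \<in> VD" by (rule mVD) (use tV in auto)
  have s3: "copyv 1 (rightv G) \<in> VD" by (rule mVD) (use tV in auto)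
  have sub: "?S \<subseteq> VD" using s1 s2 s3 by blast
  have cS: "card ?S = 3" using cdist[OF wf] by simp
  have "card (verts (sier_step G)) = card (?f ` VD)" by (simp only: verts_H_VD)
  also have "\<dots> = card (VD - ?S)" by (simp only: eq)
  also have "\<dots> = card VD - card ?S" using finite_subset[OF sub finVD] sub by (rule card_Diff_subset)
  also have "\<dots> = 3 * card (verts G) - 3" by (simp only: card_VD cS)
  finally show ?thesis .
qed

lemma ncomp_H_Q3:
  assumes A: "A \<subseteq> {..<3 * length (edges G)}"
  shows "ncomp (sier_step G) A = card ((\<lambda>x. Q3 G A `` {x}) ` VD)"
proof -
  have AH: "A \<subseteq> edge_ids (sier_step G)" using A_H[OF A] .
  let ?f = "identify G"
  have s1: "sym (edge_rel (sier_step G) A)" by (auto simp: edge_rel_def sym_def)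
  have "ncomp (sier_step G) A = card ((\<lambda>x. conn (sier_step G) A `` {?f x}) ` VD)"
    by (simp add: ncomp_def verts_H_VD image_image)
  also have "\<dots> = card ((\<lambda>x. Q3 G A `` {x}) ` VD)"
  proof (rule kernel_card, intro ballI)
    fix a b
    have "(conn (sier_step G) A `` {?f a} = conn (sier_step G) A `` {?f b}) \<longleftrightarrow> (?f a, ?f b) \<in> conn (sier_step G) A"
      unfolding conn_def by (rule class_eq_iff[OF s1])
    also have "\<dots> \<longleftrightarrow> (a,b) \<in> Q3 G A" by (rule conn_H_iff[OF wf AH])
    also have "\<dots> \<longleftrightarrow> (Q3 G A `` {a} = Q3 G A `` {b})"
      using class_eq_iff[OF sym_R(4)[OF wf]] by (simp add: Q3_def[OF wf])
    finally show "(conn (sier_step G) A `` {?f a} = conn (sier_step G) A `` {?f b}) \<longleftrightarrow> (Q3 G A `` {a} = Q3 G A `` {b})" .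
  qed
  finally show ?thesis .
qed

lemma card_Q_chain:
  "card ((\<lambda>x. Q3 G A `` {x}) ` VD) = card ((\<lambda>x. Q2 G A `` {x}) ` VD) - (if (copyv 1 (rightv G), copyv 2 (leftv G)) \<in> Q2 G A then 0 else 1)"
  "card ((\<lambda>x. Q2 G A `` {x}) ` VD) = card ((\<lambda>x. Q1 G A `` {x}) ` VD) - (if (copyv 0 (rightv G), copyv 2 (topv G)) \<in> Q1 G A then 0 else 1)"
  "card ((\<lambda>x. Q1 G A `` {x}) ` VD) = card ((\<lambda>x. Q0 G A `` {x}) ` VD) - (if (copyv 0 (leftv G), copyv 1 (topv G)) \<in> Q0 G A then 0 else 1)"
proof -
  have m: "copyv j v \<in> VD" if "j \<in> {0,1,2}" "v \<in> verts G" for j v using that by (auto simp: VD_def)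
  have tv: "topv G \<in> verts G" "leftv G \<in> verts G" "rightv G \<in> verts G" using wfG[OF wf] by auto
  show "card ((\<lambda>x. Q3 G A `` {x}) ` VD) = card ((\<lambda>x. Q2 G A `` {x}) ` VD) - (if (copyv 1 (rightv G), copyv 2 (leftv G)) \<in> Q2 G A then 0 else 1)"
    unfolding Q3_def[OF wf] Q2_def[OF wf] P3_def[OF wf]
    by (rule add_pair_card[OF sym_R(3)[OF wf] finVD]) (use m tv in auto)
  show "card ((\<lambda>x. Q2 G A `` {x}) ` VD) = card ((\<lambda>x. Q1 G A `` {x}) ` VD) - (if (copyv 0 (rightv G), copyv 2 (topv G)) \<in> Q1 G A then 0 else 1)"
    unfolding Q2_def[OF wf] Q1_def[OF wf] P2_def[OF wf]
    by (rule add_pair_card[OF sym_R(2)[OF wf] finVD]) (use m tv in auto)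
  show "card ((\<lambda>x. Q1 G A `` {x}) ` VD) = card ((\<lambda>x. Q0 G A `` {x}) ` VD) - (if (copyv 0 (leftv G), copyv 1 (topv G)) \<in> Q0 G A then 0 else 1)"
    unfolding Q1_def[OF wf] Q0_def[OF wf] P1_def[OF wf]
    by (rule add_pair_card[OF sym_R(1)[OF wf] finVD]) (use m tv in auto)
qed

lemma card_Q0:
  assumes A: "A \<subseteq> {..<3 * length (edges G)}"
  shows "card ((\<lambda>x. Q0 G A `` {x}) ` VD) = ncomp G (pc (length (edges G)) 0 A) + ncomp G (pc (length (edges G)) 1 A) + ncomp G (pc (length (edges G)) 2 A)"
proof -
  let ?h = "\<lambda>x. Q0 G A `` {x}"
  let ?m = "length (edges G)"
  have s0: "sym (gerel (endsD G) A)" by (rule sym_R(1)[OF wf])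
  have heq: "?h x = ?h y \<longleftrightarrow> (x,y) \<in> Q0 G A" for x y using class_eq_iff[OF s0] by (simp add: Q0_def[OF wf])
  have sc: "sym (edge_rel G B)" for B by (auto simp: edge_rel_def sym_def)
  have cj: "card (?h ` copyv j ` verts G) = ncomp G (pc ?m j A)" if j: "j \<in> {0,1,2}" for j
  proof -
    have "card (?h ` copyv j ` verts G) = card ((\<lambda>v. ?h (copyv j v)) ` verts G)" by (simp add: image_image)
    also have "\<dots> = card ((\<lambda>v. conn G (pc ?m j A) `` {v}) ` verts G)"
    proof (rule kernel_card, intro ballI)
      fix a b
      show "(?h (copyv j a) = ?h (copyv j b)) \<longleftrightarrow> (conn G (pc ?m j A) `` {a} = conn G (pc ?m j A) `` {b})"
        unfolding heq Q0_iff[OF wf A j j] conn_def using class_eq_iff[OF sc] by simp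
    qed
    finally show ?thesis by (simp add: ncomp_def)
  qed
  have dis: "?h ` copyv i ` verts G \<inter> ?h ` copyv j ` verts G = {}" if "i \<in> {0,1,2}" "j \<in> {0,1,2}" "i \<noteq> j" for i j
  proof -
    have "?h (copyv i a) \<noteq> ?h (copyv j b)" for a b unfolding heq Q0_iff[OF wf A that(1,2)] using that(3) by simp
    then show ?thesis by blast
  qed
  have f: "finite (?h ` copyv j ` verts G)" for j using wfG(1)[OF wf] by simp
  have "?h ` VD = (?h ` copyv 0 ` verts G \<union> ?h ` copyv 1 ` verts G) \<union> ?h ` copyv 2 ` verts G"
    by (auto simp: VD_def)
  moreover have "card ((?h ` copyv 0 ` verts G \<union> ?h ` copyv 1 ` verts G) \<union> ?h ` copyv 2 ` verts G)
      = card (?h ` copyv 0 ` verts G) + card (?h ` copyv 1 ` verts G) + card (?h ` copyv 2 ` verts G)"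
  proof -
    have d2: "(?h ` copyv 0 ` verts G \<union> ?h ` copyv 1 ` verts G) \<inter> ?h ` copyv 2 ` verts G = {}"
    proof -
      have a: "?h ` copyv 0 ` verts G \<inter> ?h ` copyv 2 ` verts G = {}" by (rule dis) simp_all
      have b: "?h ` copyv 1 ` verts G \<inter> ?h ` copyv 2 ` verts G = {}" by (rule dis) simp_all
      show ?thesis using a b by blast
    qed
    have d1: "?h ` copyv 0 ` verts G \<inter> ?h ` copyv 1 ` verts G = {}" by (rule dis) simp_all
    show ?thesis using card_Un_disjoint[OF _ _ d2] card_Un_disjoint[OF _ _ d1] f by simp
  qed
  ultimately show ?thesis using cj by simp
qed

end

definition Phi :: "pt \<Rightarrow> pt \<Rightarrow> pt \<Rightarrow> pt \<Rightarrow> real" where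
  "Phi \<tau> a b c = (if ctype a b c = \<tau> then (if plr a \<and> ptr b \<and> ptl c then -1 else 1) else 0)"

definition Rec :: "(pt \<Rightarrow> real) \<Rightarrow> pt \<Rightarrow> real" where
  "Rec S \<tau> = (\<Sum>a\<in>UNIV. \<Sum>b\<in>UNIV. \<Sum>c\<in>UNIV. Phi \<tau> a b c * S a * S b * S c)"

lemma sum_pt: "(\<Sum>a\<in>(UNIV::pt set). f a) = f PA + f PT + f PL + f PR + f PS"
  by (simp add: UNIV_pt add.assoc)

lemma Rec_vals:
  assumes "S PL = S PT" "S PR = S PT"
  shows "Rec S PA = - (S PA ^ 3) + 6 * S PA ^ 2 * S PT + 3 * S PA * S PT ^ 2"
    "Rec S PT = - (S PA ^ 2 * S PT) + S PA ^ 2 * S PS + 7 * S PA * S PT ^ 2 + 2 * S PA * S PT * S PS + 4 * S PT ^ 3 + S PT ^ 2 * S PS"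
    "Rec S PL = Rec S PT" "Rec S PR = Rec S PT"
    "Rec S PS = - (3 * S PA * S PT ^ 2) + 12 * S PA * S PT * S PS + 3 * S PA * S PS ^ 2 + 13 * S PT ^ 3 + 24 * S PT ^ 2 * S PS + 9 * S PT * S PS ^ 2 + S PS ^ 3"
  using assms by (simp_all add: Rec_def sum_pt Phi_def ctype_def algebra_simps power2_eq_square power3_eq_cube)

definition join :: "nat \<Rightarrow> nat set \<Rightarrow> nat set \<Rightarrow> nat set \<Rightarrow> nat set" where
  "join m B0 B1 B2 = B0 \<union> (\<lambda>k. m + k) ` B1 \<union> (\<lambda>k. 2 * m + k) ` B2"

lemma join_sub: "B0 \<subseteq> {..<m} \<Longrightarrow> B1 \<subseteq> {..<m} \<Longrightarrow> B2 \<subseteq> {..<m} \<Longrightarrow> join m B0 B1 B2 \<subseteq> {..<3 * m}"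
  by (auto simp: join_def)

lemma pc_join:
  assumes "B0 \<subseteq> {..<m}" "B1 \<subseteq> {..<m}" "B2 \<subseteq> {..<m}"
  shows "pc m 0 (join m B0 B1 B2) = B0" "pc m 1 (join m B0 B1 B2) = B1" "pc m 2 (join m B0 B1 B2) = B2"
  using assms by (auto simp: pc_def join_def)

lemma pc_sub': "pc m j A \<subseteq> {..<m}" by (auto simp: pc_def)

lemma join_pc:
  assumes "A \<subseteq> {..<3 * m}"
  shows "join m (pc m 0 A) (pc m 1 A) (pc m 2 A) = A"
proof
  show "join m (pc m 0 A) (pc m 1 A) (pc m 2 A) \<subseteq> A" by (auto simp: join_def pc_def)
  show "A \<subseteq> join m (pc m 0 A) (pc m 1 A) (pc m 2 A)"
  proof
    fix i assume i: "i \<in> A"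
    then have i3: "i < 3 * m" using assms by auto
    show "i \<in> join m (pc m 0 A) (pc m 1 A) (pc m 2 A)"
    proof (cases "i < m")
      case True then show ?thesis using i by (auto simp: join_def pc_def)
    next
      case False
      show ?thesis
      proof (cases "i < 2 * m")
        case True
        then have "i - m \<in> pc m 1 A" using False i by (auto simp: pc_def)
        moreover have "i = m + (i - m)" using False by simp
        ultimately show ?thesis unfolding join_def by (metis UnI1 UnI2 imageI)
      next
        case False2: False
        then have "i - 2 * m \<in> pc m 2 A" using i3 i by (auto simp: pc_def)
        moreover have "i = 2 * m + (i - 2 * m)" using False2 by simp
        ultimately show ?thesis unfolding join_def by (metis UnI2 imageI)
      qed
    qed
  qed
qed

lemma card_join:
  assumes "B0 \<subseteq> {..<m}" "B1 \<subseteq> {..<m}" "B2 \<subseteq> {..<m}"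
  shows "card (join m B0 B1 B2) = card B0 + card B1 + card B2"
proof -
  have f: "finite B0" "finite B1" "finite B2" using assms finite_subset by blast+
  have d1: "B0 \<inter> (\<lambda>k. m + k) ` B1 = {}" using assms(1) by auto
  have d2: "(B0 \<union> (\<lambda>k. m + k) ` B1) \<inter> (\<lambda>k. 2 * m + k) ` B2 = {}" using assms(1,2) by auto
  have c1: "card ((\<lambda>k. m + k) ` B1) = card B1" by (simp add: card_image)
  have c2: "card ((\<lambda>k. 2 * m + k) ` B2) = card B2" by (simp add: card_image)
  show ?thesis unfolding join_def
    using card_Un_disjoint[OF _ _ d2] card_Un_disjoint[OF _ _ d1] f c1 c2 by simp
qed

lemma sum_prod_split: "(\<Sum>p\<in>A \<times> B. h p) = (\<Sum>x\<in>A. \<Sum>y\<in>B. h (x,y))"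
  by (simp add: sum.cartesian_product split_def)

lemma sum_split3:
  "(\<Sum>A\<in>Pow {..<3 * m}. F A) = (\<Sum>B0\<in>Pow {..<m}. \<Sum>B1\<in>Pow {..<m}. \<Sum>B2\<in>Pow {..<m}. F (join m B0 B1 B2))"
proof -
  have "(\<Sum>A\<in>Pow {..<3 * m}. F A) = (\<Sum>p\<in>Pow {..<m} \<times> (Pow {..<m} \<times> Pow {..<m}). F (join m (fst p) (fst (snd p)) (snd (snd p))))"
  proof (rule sum.reindex_bij_witness[where j = "\<lambda>A. (pc m 0 A, pc m 1 A, pc m 2 A)"
        and i = "\<lambda>p. join m (fst p) (fst (snd p)) (snd (snd p))"])
    fix A assume "A \<in> Pow {..<3 * m}"
    then show "join m (fst (pc m 0 A, pc m 1 A, pc m 2 A)) (fst (snd (pc m 0 A, pc m 1 A, pc m 2 A)))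
         (snd (snd (pc m 0 A, pc m 1 A, pc m 2 A))) = A"
      using join_pc by auto
    show "(pc m 0 A, pc m 1 A, pc m 2 A) \<in> Pow {..<m} \<times> Pow {..<m} \<times> Pow {..<m}"
      using pc_sub' by auto
    show "F (join m (fst (pc m 0 A, pc m 1 A, pc m 2 A)) (fst (snd (pc m 0 A, pc m 1 A, pc m 2 A)))
         (snd (snd (pc m 0 A, pc m 1 A, pc m 2 A)))) = F A"
      using join_pc \<open>A \<in> Pow {..<3 * m}\<close> by auto
  next
    fix p assume p: "p \<in> Pow {..<m} \<times> Pow {..<m} \<times> Pow {..<m}"
    obtain B0 B1 B2 where pb: "p = (B0, B1, B2)" by (cases p) auto
    have B: "B0 \<subseteq> {..<m}" "B1 \<subseteq> {..<m}" "B2 \<subseteq> {..<m}" using p pb by auto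
    show "(pc m 0 (join m (fst p) (fst (snd p)) (snd (snd p))), pc m 1 (join m (fst p) (fst (snd p)) (snd (snd p))),
        pc m 2 (join m (fst p) (fst (snd p)) (snd (snd p)))) = p"
      using pc_join[OF B] pb by simp
    show "join m (fst p) (fst (snd p)) (snd (snd p)) \<in> Pow {..<3 * m}"
      using join_sub[OF B] pb by simp
  qed
  also have "\<dots> = (\<Sum>B0\<in>Pow {..<m}. \<Sum>p\<in>Pow {..<m} \<times> Pow {..<m}. F (join m B0 (fst p) (snd p)))"
    by (simp add: sum_prod_split)
  also have "\<dots> = (\<Sum>B0\<in>Pow {..<m}. \<Sum>B1\<in>Pow {..<m}. \<Sum>B2\<in>Pow {..<m}. F (join m B0 B1 B2))"
    by (simp add: sum_prod_split)
  finally show ?thesis .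
qed

lemma triple_sum:
  assumes fin: "finite P"
  shows "(\<Sum>B0\<in>P. \<Sum>B1\<in>P. \<Sum>B2\<in>P. Phi \<tau> (ty B0) (ty B1) (ty B2) * w B0 * w B1 * w B2) =
    (\<Sum>a\<in>UNIV. \<Sum>b\<in>UNIV. \<Sum>c\<in>UNIV. Phi \<tau> a b c * (\<Sum>B\<in>{B\<in>P. ty B = a}. w B) * (\<Sum>B\<in>{B\<in>P. ty B = b}. w B) * (\<Sum>B\<in>{B\<in>P. ty B = c}. w B))"
proof -
  define S where "S = (\<lambda>a. \<Sum>B\<in>{B\<in>P. ty B = a}. w B)"
  have sb: "(\<Sum>B\<in>P. F (ty B) * w B) = (\<Sum>a\<in>UNIV. F a * S a)" for F
    unfolding S_def by (rule sum_by_type[OF fin])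
  have inner: "(\<Sum>B2\<in>P. Phi \<tau> x y (ty B2) * u * v * w B2) = (\<Sum>c\<in>UNIV. Phi \<tau> x y c * u * v * S c)" for x y u v
    using sb[of "\<lambda>c. Phi \<tau> x y c * u * v"] by simp
  have mid: "(\<Sum>B1\<in>P. \<Sum>c\<in>UNIV. Phi \<tau> x (ty B1) c * u * w B1 * S c) = (\<Sum>b\<in>UNIV. \<Sum>c\<in>UNIV. Phi \<tau> x b c * u * S b * S c)" for x u
  proof -
    have "(\<Sum>B1\<in>P. \<Sum>c\<in>UNIV. Phi \<tau> x (ty B1) c * u * w B1 * S c) = (\<Sum>B1\<in>P. (\<Sum>c\<in>UNIV. Phi \<tau> x (ty B1) c * u * S c) * w B1)"
      by (simp add: sum_distrib_right sum_distrib_left mult_ac)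
    also have "\<dots> = (\<Sum>b\<in>UNIV. (\<Sum>c\<in>UNIV. Phi \<tau> x b c * u * S c) * S b)"
      by (rule sb)
    also have "\<dots> = (\<Sum>b\<in>UNIV. \<Sum>c\<in>UNIV. Phi \<tau> x b c * u * S b * S c)"
      by (simp add: sum_distrib_right sum_distrib_left mult_ac)
    finally show ?thesis .
  qed
  have outer: "(\<Sum>B0\<in>P. \<Sum>b\<in>UNIV. \<Sum>c\<in>UNIV. Phi \<tau> (ty B0) b c * w B0 * S b * S c) = (\<Sum>a\<in>UNIV. \<Sum>b\<in>UNIV. \<Sum>c\<in>UNIV. Phi \<tau> a b c * S a * S b * S c)"
  proof -
    have "(\<Sum>B0\<in>P. \<Sum>b\<in>UNIV. \<Sum>c\<in>UNIV. Phi \<tau> (ty B0) b c * w B0 * S b * S c) = (\<Sum>B0\<in>P. (\<Sum>b\<in>UNIV. \<Sum>c\<in>UNIV. Phi \<tau> (ty B0) b c * S b * S c) * w B0)"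
      by (simp add: sum_distrib_right sum_distrib_left mult_ac)
    also have "\<dots> = (\<Sum>a\<in>UNIV. (\<Sum>b\<in>UNIV. \<Sum>c\<in>UNIV. Phi \<tau> a b c * S b * S c) * S a)"
      by (rule sb)
    also have "\<dots> = (\<Sum>a\<in>UNIV. \<Sum>b\<in>UNIV. \<Sum>c\<in>UNIV. Phi \<tau> a b c * S a * S b * S c)"
      by (simp add: sum_distrib_right sum_distrib_left mult_ac)
    finally show ?thesis .
  qed
  have "(\<Sum>B0\<in>P. \<Sum>B1\<in>P. \<Sum>B2\<in>P. Phi \<tau> (ty B0) (ty B1) (ty B2) * w B0 * w B1 * w B2) =
    (\<Sum>a\<in>UNIV. \<Sum>b\<in>UNIV. \<Sum>c\<in>UNIV. Phi \<tau> a b c * S a * S b * S c)"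
    using inner mid outer by simp
  then show ?thesis by (simp add: S_def)
qed

lemma nul_int:
  assumes "wfg K" "B \<subseteq> edge_ids K"
  shows "int (nul K B) = int (card B) - int (card (verts K)) + int (ncomp K B)"
proof -
  have "card (verts K) - ncomp K B \<le> card B" by (rule rk_le[OF assms])
  moreover have "ncomp K B \<le> card (verts K)" using assms(1) by (intro ncomp_le) (simp add: wfg_def)
  ultimately show ?thesis by (simp add: nul_def rk_def of_nat_diff)
qed

context
  fixes G :: sgraph
  assumes wf: "wfg G"
begin

lemma wfg_H: "wfg (sier_step G)"
proof -
  let ?f = "identify G"
  let ?m = "length (edges G)"
  have m0: "0 < ?m" by (rule wfG(10)[OF wf])
  have inVD: "copyv j v \<in> VD G" if "j < 3" "v \<in> verts G" for j v
  proof -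
    have "j = 0 \<or> j = 1 \<or> j = 2" using that by auto
    then show ?thesis using that by (auto simp: VD_def[OF wf])
  qed
  have edges_in: "fst (edges (sier_step G) ! i) \<in> verts (sier_step G) \<and> snd (edges (sier_step G) ! i) \<in> verts (sier_step G)"
    if i: "i < length (edges (sier_step G))" for i
  proof -
    have i3: "i < 3 * ?m" using i by (simp add: H_len[OF wf])
    have j: "i div ?m < 3" using i3 m0 by (simp add: less_mult_imp_div_less mult.commute)
    have k: "i mod ?m < ?m" using m0 by simp
    have uv: "fst (edges G ! (i mod ?m)) \<in> verts G" "snd (edges G ! (i mod ?m)) \<in> verts G"
      using wfG(2,3)[OF wf k] by auto
    have e: "edges (sier_step G) ! i = (?f (copyv (i div ?m) (fst (edges G ! (i mod ?m)))), ?f (copyv (i div ?m) (snd (edges G ! (i mod ?m)))))"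
      using H_nth[OF wf i3] by (cases "edges G ! (i mod ?m)") (simp add: endsD_def)
    show ?thesis unfolding e verts_H_VD[OF wf] using inVD[OF j uv(1)] inVD[OF j uv(2)] by auto
  qed
  have tv: "topv G \<in> verts G" "leftv G \<in> verts G" "rightv G \<in> verts G"
    "topv G \<noteq> leftv G" "topv G \<noteq> rightv G" "leftv G \<noteq> rightv G" using wfG[OF wf] by auto
  have T: "topv (sier_step G) = copyv 0 (topv G)" using tv by (simp add: H_terms[OF wf] ident_c0[OF wf])
  have L: "leftv (sier_step G) = copyv 1 (leftv G)" using tv by (simp add: H_terms[OF wf] ident_c1[OF wf] ident_c1'[OF wf])
  have R: "rightv (sier_step G) = copyv 2 (rightv G)" using tv by (simp add: H_terms[OF wf] ident_c2[OF wf])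
  have Tin: "topv (sier_step G) \<in> verts (sier_step G)" "leftv (sier_step G) \<in> verts (sier_step G)"
    "rightv (sier_step G) \<in> verts (sier_step G)"
    unfolding H_terms[OF wf] verts_H_VD[OF wf] using inVD tv by auto
  show ?thesis unfolding wfg_def
    using finVD[OF wf] edges_in Tin T L R tv m0
    by (simp add: verts_H_VD[OF wf] copyv_eq H_len[OF wf])
qed

lemma ncomp_pos: "0 < ncomp G B"
proof -
  have "verts G \<noteq> {}" using wfG(4)[OF wf] by auto
  then show ?thesis using wfG(1)[OF wf] by (simp add: ncomp_def card_gt_0_iff)
qed

definition cyc :: "pt \<Rightarrow> pt \<Rightarrow> pt \<Rightarrow> bool" where
  "cyc a b c \<longleftrightarrow> plr a \<and> ptr b \<and> ptl c"

lemma ncomp_H: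
  assumes A: "A \<subseteq> {..<3 * length (edges G)}"
  shows "int (ncomp (sier_step G) A) = int (ncomp G (pc (length (edges G)) 0 A)) + int (ncomp G (pc (length (edges G)) 1 A))
     + int (ncomp G (pc (length (edges G)) 2 A)) - 3 + (if cyc (ptype G (pc (length (edges G)) 0 A)) (ptype G (pc (length (edges G)) 1 A)) (ptype G (pc (length (edges G)) 2 A)) then 1 else 0)"
proof -
  let ?m = "length (edges G)"
  let ?c = "cyc (ptype G (pc ?m 0 A)) (ptype G (pc ?m 1 A)) (ptype G (pc ?m 2 A))"
  let ?C3 = "card ((\<lambda>x. Q3 G A `` {x}) ` VD G)"
  let ?C2 = "card ((\<lambda>x. Q2 G A `` {x}) ` VD G)"
  let ?C1 = "card ((\<lambda>x. Q1 G A `` {x}) ` VD G)"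
  let ?C0 = "card ((\<lambda>x. Q0 G A `` {x}) ` VD G)"
  have k: "0 < ncomp G (pc ?m j A)" for j by (rule ncomp_pos)
  have c3: "?C3 = ?C2 - (if ?c then 0 else 1)"
    using card_Q_chain(1)[OF wf, of A] glue_facts(3)[OF wf A] by (simp add: cyc_def)
  have c2: "?C2 = ?C1 - 1" using card_Q_chain(2)[OF wf, of A] glue_facts(2)[OF wf A] by simp
  have c1: "?C1 = ?C0 - 1" using card_Q_chain(3)[OF wf, of A] glue_facts(1)[OF wf A] by simp
  have c0: "?C0 = ncomp G (pc ?m 0 A) + ncomp G (pc ?m 1 A) + ncomp G (pc ?m 2 A)" by (rule card_Q0[OF wf A])
  have n: "ncomp (sier_step G) A = ?C3" by (rule ncomp_H_Q3[OF wf A])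
  have ge: "3 \<le> ?C0" using c0 k[of 0] k[of 1] k[of 2] by linarith
  show ?thesis unfolding n c3 c2 c1 using ge c0 by (auto simp: of_nat_diff)
qed

lemma nul_H:
  assumes A: "A \<subseteq> {..<3 * length (edges G)}"
  shows "nul (sier_step G) A = nul G (pc (length (edges G)) 0 A) + nul G (pc (length (edges G)) 1 A) + nul G (pc (length (edges G)) 2 A)
     + (if cyc (ptype G (pc (length (edges G)) 0 A)) (ptype G (pc (length (edges G)) 1 A)) (ptype G (pc (length (edges G)) 2 A)) then 1 else 0)"
proof -
  let ?m = "length (edges G)"
  have AH: "A \<subseteq> edge_ids (sier_step G)" using A_H[OF wf A] .
  have pcE: "pc ?m j A \<subseteq> edge_ids G" for j by (rule pc_sub[OF wf])
  have cA: "card A = card (pc ?m 0 A) + card (pc ?m 1 A) + card (pc ?m 2 A)"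
    using card_join[of "pc ?m 0 A" ?m "pc ?m 1 A" "pc ?m 2 A", OF pc_sub' pc_sub' pc_sub'] join_pc[OF A] by simp
  have V3: "3 \<le> card (verts G)"
  proof -
    have "{topv G, leftv G, rightv G} \<subseteq> verts G" using wfG[OF wf] by auto
    then have "card {topv G, leftv G, rightv G} \<le> card (verts G)" using wfG(1)[OF wf] by (rule card_mono[rotated])
    then show ?thesis using wfG(7-9)[OF wf] by simp
  qed
  have cV: "int (card (verts (sier_step G))) = 3 * int (card (verts G)) - 3"
    using card_verts_H[OF wf] V3 by simp
  have "int (nul (sier_step G) A) = int (nul G (pc ?m 0 A)) + int (nul G (pc ?m 1 A)) + int (nul G (pc ?m 2 A))
     + (if cyc (ptype G (pc ?m 0 A)) (ptype G (pc ?m 1 A)) (ptype G (pc ?m 2 A)) then 1 else 0)"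
    unfolding nul_int[OF wfg_H AH] nul_int[OF wf pcE] cV ncomp_H[OF A] cA by simp
  also have "\<dots> = int (nul G (pc ?m 0 A) + nul G (pc ?m 1 A) + nul G (pc ?m 2 A)
     + (if cyc (ptype G (pc ?m 0 A)) (ptype G (pc ?m 1 A)) (ptype G (pc ?m 2 A)) then 1 else 0))"
    by simp
  finally show ?thesis by (simp only: of_nat_eq_iff)
qed

lemma ST_H: "ST (sier_step G) \<tau> = Rec (ST G) \<tau>"
proof -
  let ?m = "length (edges G)"
  let ?w = "\<lambda>B. (-1::real) ^ nul G B"
  have eH: "edge_ids (sier_step G) = {..<3 * ?m}" by (simp add: edge_ids_def H_len[OF wf])
  have eG: "edge_ids G = {..<?m}" by (simp add: edge_ids_def)
  have "ST (sier_step G) \<tau> = (\<Sum>A\<in>Pow {..<3 * ?m}. if ptype (sier_step G) A = \<tau> then (-1::real) ^ nul (sier_step G) A else 0)"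
    unfolding ST_def eH by (rule sum.inter_filter) simp
  also have "\<dots> = (\<Sum>B0\<in>Pow {..<?m}. \<Sum>B1\<in>Pow {..<?m}. \<Sum>B2\<in>Pow {..<?m}.
      Phi \<tau> (ptype G B0) (ptype G B1) (ptype G B2) * ?w B0 * ?w B1 * ?w B2)"
    unfolding sum_split3
  proof (intro sum.cong refl)
    fix B0 B1 B2 assume B: "B0 \<in> Pow {..<?m}" "B1 \<in> Pow {..<?m}" "B2 \<in> Pow {..<?m}"
    then have Bs: "B0 \<subseteq> {..<?m}" "B1 \<subseteq> {..<?m}" "B2 \<subseteq> {..<?m}" by auto
    let ?A = "join ?m B0 B1 B2"
    have A: "?A \<subseteq> {..<3 * ?m}" by (rule join_sub[OF Bs])
    have pcs: "pc ?m 0 ?A = B0" "pc ?m 1 ?A = B1" "pc ?m 2 ?A = B2" using pc_join[OF Bs] by auto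
    have ty: "ptype (sier_step G) ?A = ctype (ptype G B0) (ptype G B1) (ptype G B2)"
      using ptype_H[OF wf A] pcs by simp
    have nu: "nul (sier_step G) ?A = nul G B0 + nul G B1 + nul G B2 + (if cyc (ptype G B0) (ptype G B1) (ptype G B2) then 1 else 0)"
      using nul_H[OF A] pcs by simp
    show "(if ptype (sier_step G) ?A = \<tau> then (-1::real) ^ nul (sier_step G) ?A else 0) =
       Phi \<tau> (ptype G B0) (ptype G B1) (ptype G B2) * ?w B0 * ?w B1 * ?w B2"
      unfolding ty nu Phi_def cyc_def by (simp add: power_add)
  qed
  also have "\<dots> = Rec (ST G) \<tau>"
    unfolding triple_sum[OF finite_Pow_iff[THEN iffD2, OF finite_lessThan]] Rec_def ST_def eG ..
  finally show ?thesis .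
qed

end

lemma edge_rel_insert:
  "e < length (edges G) \<Longrightarrow> edge_rel G (insert e A) = edge_rel G A \<union> {(fst (edges G ! e), snd (edges G ! e)), (snd (edges G ! e), fst (edges G ! e))}"
  by (auto simp: edge_rel_def)

lemma sym_edge_rel: "sym (edge_rel G A)" by (auto simp: edge_rel_def sym_def)

lemma conn_insert_iff:
  assumes "e < length (edges G)"
  shows "(a,b) \<in> conn G (insert e A) \<longleftrightarrow> (a,b) \<in> conn G A
     \<or> ((a, fst (edges G ! e)) \<in> conn G A \<and> (snd (edges G ! e), b) \<in> conn G A)
     \<or> ((a, snd (edges G ! e)) \<in> conn G A \<and> (fst (edges G ! e), b) \<in> conn G A)"
  unfolding conn_def edge_rel_insert[OF assms] rtrancl_add_pair[OF sym_edge_rel] by simp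

lemma conn_empty_iff: "(a,b) \<in> conn G {} \<longleftrightarrow> a = b"
  by (simp add: conn_def edge_rel_def)

lemma ncomp_insert:
  assumes "e < length (edges G)" "finite (verts G)" "fst (edges G ! e) \<in> verts G" "snd (edges G ! e) \<in> verts G"
  shows "ncomp G (insert e A) = ncomp G A - (if (fst (edges G ! e), snd (edges G ! e)) \<in> conn G A then 0 else 1)"
  unfolding ncomp_def conn_def edge_rel_insert[OF assms(1)]
  by (rule add_pair_card[OF sym_edge_rel assms(2-4)])

lemma ncomp_empty: "ncomp G {} = card (verts G)"
proof -
  have "(\<lambda>v. conn G {} `` {v}) = (\<lambda>v. {v})" by (auto simp: conn_empty_iff)
  moreover have "inj_on (\<lambda>v. {v}) (verts G)" by (auto simp: inj_on_def)
  ultimately show ?thesis by (simp add: ncomp_def card_image)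
qed

lemma wfg_tri: "wfg triangle"
proof -
  have "\<forall>i<3. fst ([(0::nat,1::nat),(0,2),(1,2)] ! i) \<in> {0,1,2} \<and> snd ([(0::nat,1::nat),(0,2),(1,2)] ! i) \<in> {0,1,2}"
    by (auto simp: less_Suc_eq numeral_3_eq_3)
  then show ?thesis by (simp add: wfg_def triangle_def)
qed

lemma tri_facts: "length (edges triangle) = 3" "verts triangle = {0,1,2}" "topv triangle = 0" "leftv triangle = 1"
  "rightv triangle = 2" "edges triangle ! 0 = (0,1)" "edges triangle ! 1 = (0,2)" "edges triangle ! 2 = (1,2)" "edges triangle ! Suc 0 = (0,2)"
  by (simp_all add: triangle_def)

lemma ST_tri: "ST triangle PA = 2" "ST triangle PT = 1" "ST triangle PL = 1" "ST triangle PR = 1" "ST triangle PS = 1"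
proof -
  have eid: "edge_ids triangle = {0,1,2}" by (auto simp: edge_ids_def tri_facts)
  have ST: "ST triangle \<tau> = (\<Sum>A\<in>Pow {0,1,2}. if ptype triangle A = \<tau> then (-1::real) ^ nul triangle A else 0)" for \<tau>
    unfolding ST_def eid by (rule sum.inter_filter) simp
  have fin: "finite (verts triangle)" by (simp add: tri_facts)
  have ci: "(a,b) \<in> conn triangle (insert e A) \<longleftrightarrow> (a,b) \<in> conn triangle A
     \<or> ((a, fst (edges triangle ! e)) \<in> conn triangle A \<and> (snd (edges triangle ! e), b) \<in> conn triangle A)
     \<or> ((a, snd (edges triangle ! e)) \<in> conn triangle A \<and> (fst (edges triangle ! e), b) \<in> conn triangle A)"
    if "e \<in> {0,1,2}" for e a b A
    using conn_insert_iff[of e triangle] that by (auto simp: tri_facts)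
  have ni: "ncomp triangle (insert e A) = ncomp triangle A - (if (fst (edges triangle ! e), snd (edges triangle ! e)) \<in> conn triangle A then 0 else 1)"
    if "e \<in> {0,1,2}" for e A
  proof (rule ncomp_insert[OF _ fin])
    show "e < length (edges triangle)" using that by (auto simp: tri_facts)
    show "fst (edges triangle ! e) \<in> verts triangle" "snd (edges triangle ! e) \<in> verts triangle"
      using that by (auto simp: tri_facts)
  qed
  have n0: "ncomp triangle {} = 3" by (simp add: ncomp_empty tri_facts)
  have nulc: "nul triangle A = card A - (3 - ncomp triangle A)" for A
    by (simp add: nul_def rk_def tri_facts)
  have P: "(\<Sum>A\<in>Pow {0,1,2::nat}. F A) = F {} + F {2} + F {1} + F {1,2} + F {0} + F {0,2} + F {0,1} + F {0,1,2}" for F :: "nat set \<Rightarrow> real"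
    by (simp add: sum_Pow_insert)
  have c0: "(a,b) \<in> conn triangle {} \<longleftrightarrow> a = b" for a b by (rule conn_empty_iff)
  show "ST triangle PA = 2" "ST triangle PT = 1" "ST triangle PL = 1" "ST triangle PR = 1" "ST triangle PS = 1"
    unfolding ST P nulc ptype_def
    by (simp_all add: ci ni n0 c0 tri_facts mkpt_def)
qed

lemma gamma_inv: "wfg (gamma_aux k) \<and> ST (gamma_aux k) PL = ST (gamma_aux k) PT \<and> ST (gamma_aux k) PR = ST (gamma_aux k) PT"
proof (induction k)
  case 0
  then show ?case using wfg_tri ST_tri by simp
next
  case (Suc k)
  let ?G = "gamma_aux k"
  have wf: "wfg ?G" using Suc.IH by simp
  have sym: "ST ?G PL = ST ?G PT" "ST ?G PR = ST ?G PT" using Suc.IH by simp_all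
  have "ST (sier_step ?G) PL = ST (sier_step ?G) PT" "ST (sier_step ?G) PR = ST (sier_step ?G) PT"
    unfolding ST_H[OF wf] using Rec_vals[OF sym] by simp_all
  then show ?case using wfg_H[OF wf] by simp
qed

lemma Gamma_Suc: "1 \<le> n \<Longrightarrow> Gamma (n + 1) = sier_step (Gamma n)"
  by (cases n) (simp_all add: Gamma_def)

theorem proposition3p9:
  fixes n :: nat
  assumes "n \<ge> 1"
  shows "real (card (acyclic_orientations (Gamma n))) = tutte (Gamma n) 2 0
    \<and> tutte (Gamma n) 2 0 = tutte2 (Gamma n) 2 0 + 3 * NN (Gamma n) 2 0 + MM (Gamma n) 2 0
    \<and> tutte (Gamma (n+1)) 2 0 = (tutte (Gamma n) 2 0) ^ 3
          - 2 * (tutte2 (Gamma n) 2 0 + NN (Gamma n) 2 0) ^ 3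
    \<and> (let a = tutte2 (Gamma n) 2 0; b = NN (Gamma n) 2 0; c = MM (Gamma n) 2 0 in
        tutte2 (Gamma (n+1)) 2 0 = - (a^3) + 6*a^2*b + 3*a*b^2
      \<and> NN (Gamma (n+1)) 2 0 = - (a^2*b) + a^2*c + 7*a*b^2 + 2*a*b*c + 4*b^3 + b^2*c
      \<and> MM (Gamma (n+1)) 2 0 = - (3*a*b^2) + 12*a*b*c + 3*a*c^2 + 13*b^3 + 24*b^2*c
                                + 9*b*c^2 + c^3)
    \<and> tutte2 (Gamma 1) 2 0 = 2 \<and> NN (Gamma 1) 2 0 = 1 \<and> MM (Gamma 1) 2 0 = 1"
proof -
  let ?G = "Gamma n"
  have inv: "wfg ?G" "ST ?G PL = ST ?G PT" "ST ?G PR = ST ?G PT"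
    using gamma_inv[of "n - 1"] by (simp_all add: Gamma_def)
  have H: "Gamma (n + 1) = sier_step ?G" by (rule Gamma_Suc[OF assms])
  have NN_ST: "NN K 2 0 = ST K PT" for K by (simp add: NN_def tutte1_ST)
  have MM_ST: "MM K 2 0 = ST K PS" for K by (simp add: MM_def tutte0_ST)
  have T_ST: "tutte K 2 0 = ST K PA + ST K PT + ST K PL + ST K PR + ST K PS" for K
    by (simp add: tutte_ST sum_pt)
  have STH: "ST (Gamma (n+1)) \<tau> = Rec (ST ?G) \<tau>" for \<tau> unfolding H by (rule ST_H[OF inv(1)])
  note RV = Rec_vals[OF inv(2,3)]
  have G1: "Gamma 1 = triangle" by (simp add: Gamma_def)
  show ?thesis
    unfolding Let_def
  proof (intro conjI)
    show "real (card (acyclic_orientations ?G)) = tutte ?G 2 0" by (rule AO_eq_tutte[OF inv(1)])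
    show "tutte ?G 2 0 = tutte2 ?G 2 0 + 3 * NN ?G 2 0 + MM ?G 2 0"
      unfolding T_ST tutte2_ST NN_ST MM_ST inv(2,3) by simp
    show "tutte (Gamma (n+1)) 2 0 = (tutte ?G 2 0) ^ 3 - 2 * (tutte2 ?G 2 0 + NN ?G 2 0) ^ 3"
      unfolding T_ST tutte2_ST NN_ST MM_ST STH RV inv(2,3)
      by (simp add: algebra_simps power2_eq_square power3_eq_cube)
    show "tutte2 (Gamma (n + 1)) 2 0 = - (tutte2 ?G 2 0 ^ 3) + 6 * tutte2 ?G 2 0 ^ 2 * NN ?G 2 0 + 3 * tutte2 ?G 2 0 * NN ?G 2 0 ^ 2"
      unfolding tutte2_ST NN_ST STH RV by simp
    show "NN (Gamma (n + 1)) 2 0 = - (tutte2 ?G 2 0 ^ 2 * NN ?G 2 0) + tutte2 ?G 2 0 ^ 2 * MM ?G 2 0 +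
        7 * tutte2 ?G 2 0 * NN ?G 2 0 ^ 2 + 2 * tutte2 ?G 2 0 * NN ?G 2 0 * MM ?G 2 0 + 4 * NN ?G 2 0 ^ 3 + NN ?G 2 0 ^ 2 * MM ?G 2 0"
      unfolding tutte2_ST NN_ST MM_ST STH RV by simp
    show "MM (Gamma (n + 1)) 2 0 = - (3 * tutte2 ?G 2 0 * NN ?G 2 0 ^ 2) + 12 * tutte2 ?G 2 0 * NN ?G 2 0 * MM ?G 2 0 +
        3 * tutte2 ?G 2 0 * MM ?G 2 0 ^ 2 + 13 * NN ?G 2 0 ^ 3 + 24 * NN ?G 2 0 ^ 2 * MM ?G 2 0 +
        9 * NN ?G 2 0 * MM ?G 2 0 ^ 2 + MM ?G 2 0 ^ 3"
      unfolding tutte2_ST NN_ST MM_ST STH RV by simp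
    show "tutte2 (Gamma 1) 2 0 = 2" unfolding G1 tutte2_ST by (rule ST_tri)
    show "NN (Gamma 1) 2 0 = 1" unfolding G1 NN_ST by (rule ST_tri)
    show "MM (Gamma 1) 2 0 = 1" unfolding G1 MM_ST by (rule ST_tri)
  qed
qed

end
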